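(* Let $R$ be an integral domain of breadth at most $n$ (for some finite $n\ge1$), and let $\tilde{R}$ be the integral closure of $R$ in $\mathrm{Frac}(R)$. Then there are valuation rings $\mathcal{O}_1,\ldots,\mathcal{O}_m$ on $\mathrm{Frac}(R)$ with $\tilde{R}=\bigcap_{i=1}^m\mathcal{O}_i$. Moreover, $\tilde{R}$ and the $\mathcal{O}_i$ are definable subsets of $\mathrm{Frac}(R)$ (with $\mathrm{Frac}(R)$ interpreted in the ring $R$).
   Context: Rings are commutative and unital. The breadth $\mathrm{br}(R)$ satisfies $\mathrm{br}(R)\le n$ iff for any $x_1,\ldots,x_{n+1}\in R$ there is $i$ such that the ideal generated by $x_1,\ldots,x_{n+1}$ equals the ideal generated by $\{x_j:j\neq i\}$. Definable means definable with parameters in the language of rings. *)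

theory Defs
  imports "HOL-Computational_Algebra.Fraction_Field" "HOL-Computational_Algebra.Polynomial"
begin

definition gen_ideal :: "nat set \<Rightarrow> (nat \<Rightarrow> 'a::comm_ring_1) \<Rightarrow> 'a set" where
  "gen_ideal J x = {\<Sum>j\<in>J. c j * x j | c. True}"

definition breadth_le :: "'a::comm_ring_1 itself \<Rightarrow> nat \<Rightarrow> bool" where
  "breadth_le _ n \<longleftrightarrow>
     (\<forall>x :: nat \<Rightarrow> 'a. \<exists>i\<le>n. gen_ideal {..n} x = gen_ideal ({..n} - {i}) x)"

definition frac_embed :: "'a::idom \<Rightarrow> 'a fract" where
  "frac_embed a = Fraction_Field.Fract a 1"

definition integral_closure :: "'a::idom itself \<Rightarrow> 'a fract set" where
  "integral_closure _ =
     {z. \<exists>p :: 'a poly. lead_coeff p = 1 \<and> poly (map_poly frac_embed p) z = 0}"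

definition valuation_ring :: "'k::field set \<Rightarrow> bool" where
  "valuation_ring V \<longleftrightarrow>
     0 \<in> V \<and> 1 \<in> V \<and> (\<forall>x\<in>V. \<forall>y\<in>V. x + y \<in> V \<and> - x \<in> V \<and> x * y \<in> V) \<and>
     (\<forall>x. x \<noteq> 0 \<longrightarrow> x \<in> V \<or> inverse x \<in> V)"

datatype 'a rterm = RVar nat | RConst 'a | RZero | ROne
  | RAdd "'a rterm" "'a rterm" | RMinus "'a rterm" | RMul "'a rterm" "'a rterm"

datatype 'a rformula = FEq "'a rterm" "'a rterm" | FNot "'a rformula"
  | FConj "'a rformula" "'a rformula" | FEx nat "'a rformula"

primrec teval :: "(nat \<Rightarrow> 'a::comm_ring_1) \<Rightarrow> 'a rterm \<Rightarrow> 'a" where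
  "teval e (RVar k) = e k"
| "teval e (RConst c) = c"
| "teval e RZero = 0"
| "teval e ROne = 1"
| "teval e (RAdd s t) = teval e s + teval e t"
| "teval e (RMinus s) = - teval e s"
| "teval e (RMul s t) = teval e s * teval e t"

primrec sat :: "(nat \<Rightarrow> 'a::comm_ring_1) \<Rightarrow> 'a rformula \<Rightarrow> bool" where
  "sat e (FEq s t) \<longleftrightarrow> teval e s = teval e t"
| "sat e (FNot f) \<longleftrightarrow> \<not> sat e f"
| "sat e (FConj f g) \<longleftrightarrow> sat e f \<and> sat e g"
| "sat e (FEx k f) \<longleftrightarrow> (\<exists>a. sat (e(k := a)) f)"

text \<open>A binary relation on R definable (with parameters, given as constants) in R,
  with the two free variables 0 and 1.\<close>
definition definable2 :: "('a::comm_ring_1 \<Rightarrow> 'a \<Rightarrow> bool) \<Rightarrow> bool" where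
  "definable2 P \<longleftrightarrow> (\<exists>\<phi>. \<forall>a b. P a b \<longleftrightarrow> sat ((\<lambda>_. 0)(0 := a, 1 := b)) \<phi>)"

text \<open>Frac(R) is interpreted in R as pairs (a,b) with b \<noteq> 0 modulo (a,b)~(c,d) iff ad = bc.\<close>
definition frac_definable :: "'a::idom fract set \<Rightarrow> bool" where
  "frac_definable S \<longleftrightarrow> definable2 (\<lambda>a b. b \<noteq> 0 \<and> Fraction_Field.Fract a b \<in> S)"

end

theory Submission
  imports Defs "Jordan_Normal_Form.Char_Poly"
begin


lemma fe_add[simp]: "frac_embed (a + b) = frac_embed a + frac_embed b"
  by (simp add: frac_embed_def)
lemma fe_mult[simp]: "frac_embed (a * b) = frac_embed a * frac_embed b"
  by (simp add: frac_embed_def)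
lemma fe_0[simp]: "frac_embed 0 = 0"
  by (simp add: frac_embed_def fract_collapse)
lemma fe_1[simp]: "frac_embed 1 = 1"
  by (simp add: frac_embed_def fract_collapse)
lemma fe_minus[simp]: "frac_embed (- a) = - frac_embed a"
  by (simp add: frac_embed_def)
lemma fe_diff[simp]: "frac_embed (a - b) = frac_embed a - frac_embed b"
  by (simp add: frac_embed_def)
lemma fe_inj[simp]: "frac_embed a = frac_embed b \<longleftrightarrow> a = b"
  by (simp add: frac_embed_def eq_fract)
lemma fe_eq0[simp]: "frac_embed a = 0 \<longleftrightarrow> a = 0"
  using fe_inj[of a 0] by simp
lemma fe_power[simp]: "frac_embed (a ^ k) = frac_embed a ^ k"
  by (induct k) auto
lemma fe_sum: "frac_embed (sum f A) = (\<Sum>x\<in>A. frac_embed (f x))"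
  by (induct A rule: infinite_finite_induct) auto
lemma Fract_div: "b \<noteq> 0 \<Longrightarrow> Fraction_Field.Fract a b = frac_embed a / frac_embed b"
  by (simp add: frac_embed_def eq_fract)

lemma fract_exists: "\<exists>a b. b \<noteq> 0 \<and> (z::'a::idom fract) = frac_embed a / frac_embed b"
  by (cases z) (auto simp: Fract_div)

definition RR :: "'a::idom fract set" where "RR = range frac_embed"

lemma RR_fe[simp]: "frac_embed a \<in> RR" by (simp add: RR_def)
lemma RR_0[simp]: "0 \<in> RR" using RR_fe[of 0] by simp
lemma RR_1[simp]: "1 \<in> RR" using RR_fe[of 1] by simp
lemma RR_add: "x \<in> RR \<Longrightarrow> y \<in> RR \<Longrightarrow> x + y \<in> RR"
  by (auto simp: RR_def) (metis fe_add rangeI)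
lemma RR_mult: "x \<in> RR \<Longrightarrow> y \<in> RR \<Longrightarrow> x * y \<in> RR"
  by (auto simp: RR_def) (metis fe_mult rangeI)
lemma RR_minus: "x \<in> RR \<Longrightarrow> - x \<in> RR"
  by (auto simp: RR_def) (metis fe_minus rangeI)

definition subring :: "'k::field set \<Rightarrow> bool" where
  "subring V \<longleftrightarrow> 0 \<in> V \<and> 1 \<in> V \<and> (\<forall>x\<in>V. \<forall>y\<in>V. x + y \<in> V \<and> - x \<in> V \<and> x * y \<in> V)"

definition unitV :: "'k::field set \<Rightarrow> 'k \<Rightarrow> bool" where
  "unitV V u \<longleftrightarrow> u \<noteq> 0 \<and> u \<in> V \<and> inverse u \<in> V"

definition mV :: "'k::field set \<Rightarrow> 'k set" where
  "mV V = {u \<in> V. \<not> unitV V u}"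

lemma vr_subring: "valuation_ring V \<Longrightarrow> subring V"
  by (simp add: valuation_ring_def subring_def)

lemma vr_iff: "valuation_ring V \<longleftrightarrow> subring V \<and> (\<forall>x. x \<noteq> 0 \<longrightarrow> x \<in> V \<or> inverse x \<in> V)"
  by (auto simp add: valuation_ring_def subring_def)

context
  fixes V :: "'k::field set"
  assumes S: "subring V"
begin
lemma sr0[simp]: "0 \<in> V" using S by (simp add: subring_def)
lemma sr1[simp]: "1 \<in> V" using S by (simp add: subring_def)
lemma sr_add[intro]: "x \<in> V \<Longrightarrow> y \<in> V \<Longrightarrow> x + y \<in> V" using S by (simp add: subring_def)
lemma sr_mult[intro]: "x \<in> V \<Longrightarrow> y \<in> V \<Longrightarrow> x * y \<in> V" using S by (simp add: subring_def)
lemma sr_minus[intro]: "x \<in> V \<Longrightarrow> - x \<in> V" using S by (simp add: subring_def)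
lemma sr_minus_iff[simp]: "- x \<in> V \<longleftrightarrow> x \<in> V" using sr_minus[of x] sr_minus[of "-x"] by auto
lemma sr_diff[intro]: "x \<in> V \<Longrightarrow> y \<in> V \<Longrightarrow> x - y \<in> V"
  using sr_add[of x "-y"] by simp
lemma sr_power[intro]: "x \<in> V \<Longrightarrow> x ^ k \<in> V" by (induct k) auto
lemma sr_sum[intro]: "(\<And>i. i \<in> A \<Longrightarrow> f i \<in> V) \<Longrightarrow> sum f A \<in> V"
  by (induct A rule: infinite_finite_induct) auto
end

context
  fixes V :: "'k::field set"
  assumes VR: "valuation_ring V"
begin
lemma VS: "subring V" using VR by (rule vr_subring)
lemma vr_cases: "x \<noteq> 0 \<Longrightarrow> x \<in> V \<or> inverse x \<in> V" using VR by (simp add: valuation_ring_def)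

lemma notin_inv_m: "x \<notin> V \<Longrightarrow> inverse x \<in> mV V"
  using vr_cases[of x] sr0[OF VS] by (auto simp: mV_def unitV_def)

lemma m_sub: "mV V \<subseteq> V" by (auto simp: mV_def)

lemma m_mult: "x \<in> mV V \<Longrightarrow> v \<in> V \<Longrightarrow> x * v \<in> mV V"
proof -
  assume x: "x \<in> mV V" and v: "v \<in> V"
  show ?thesis
  proof (rule ccontr)
    assume "x * v \<notin> mV V"
    then have u: "x * v \<noteq> 0" "inverse (x*v) \<in> V" using x v sr_mult[OF VS] by (auto simp: mV_def unitV_def)
    then have "inverse x = v * inverse (x * v)" by (auto simp: field_simps)
    moreover have "v * inverse (x * v) \<in> V" using u v sr_mult[OF VS] by blast
    ultimately have "inverse x \<in> V" by metis
    with x u show False by (auto simp: mV_def unitV_def)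
  qed
qed

lemma m_mult': "x \<in> mV V \<Longrightarrow> v \<in> V \<Longrightarrow> v * x \<in> mV V"
  by (metis m_mult mult.commute)

lemma m_0[simp]: "0 \<in> mV V" by (simp add: mV_def unitV_def VS)
lemma m_1[simp]: "1 \<notin> mV V" by (simp add: mV_def unitV_def VS)

lemma m_minus: "x \<in> mV V \<Longrightarrow> - x \<in> mV V"
  using m_mult[of x "-1"] VS by simp

lemma m_add: "x \<in> mV V \<Longrightarrow> y \<in> mV V \<Longrightarrow> x + y \<in> mV V"
proof -
  assume x: "x \<in> mV V" and y: "y \<in> mV V"
  show ?thesis
  proof (cases "x = 0 \<or> y = 0")
    case True then show ?thesis using x y by auto
  next
    case False
    then have nz: "x \<noteq> 0" "y \<noteq> 0" by auto
    have main: "a + b \<in> mV V" if a: "a \<in> mV V" and b: "b \<in> mV V" and az: "a \<noteq> 0" and r: "b / a \<in> V" for a b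
    proof -
      have "a + b = a * (1 + b / a)" using az by (simp add: field_simps)
      moreover have "1 + b / a \<in> V" using r VS by auto
      ultimately show ?thesis using m_mult[OF a] by simp
    qed
    have "y / x \<noteq> 0" using nz by simp
    from vr_cases[OF this] show ?thesis
    proof
      assume "y / x \<in> V" then show ?thesis using main[OF x y nz(1)] by simp
    next
      assume "inverse (y / x) \<in> V"
      then have "x / y \<in> V" by simp
      then show ?thesis using main[OF y x nz(2)] by (simp add: add.commute)
    qed
  qed
qed

lemma m_diff: "x \<in> mV V \<Longrightarrow> y \<in> mV V \<Longrightarrow> x - y \<in> mV V"
  using m_add[of x "-y"] m_minus[of y] by simp

lemma m_sum: "(\<And>i. i \<in> A \<Longrightarrow> f i \<in> mV V) \<Longrightarrow> sum f A \<in> mV V"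
  by (induct A rule: infinite_finite_induct) (auto intro: m_add)

lemma one_plus_m_unit: "t \<in> mV V \<Longrightarrow> unitV V (1 + t)"
proof -
  assume t: "t \<in> mV V"
  have in1: "1 + t \<in> V" using t m_sub VS by auto
  show ?thesis
  proof (rule ccontr)
    assume "\<not> unitV V (1 + t)"
    then have "1 + t \<in> mV V" using in1 by (simp add: mV_def)
    then have "(1 + t) - t \<in> mV V" using m_diff t by blast
    then show False by simp
  qed
qed

lemma unit_mult_notin: "x \<notin> V \<Longrightarrow> unitV V u \<Longrightarrow> x * u \<notin> V"
proof
  assume x: "x \<notin> V" and u: "unitV V u" and xu: "x * u \<in> V"
  have "x = (x * u) * inverse u" using u by (simp add: unitV_def)
  moreover have "(x * u) * inverse u \<in> V" using xu u sr_mult[OF VS] by (simp add: unitV_def)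
  ultimately have "x \<in> V" by metis
  with x show False by simp
qed

lemma m_notunit: "x \<in> mV V \<Longrightarrow> \<not> unitV V x" by (simp add: mV_def)

lemma in_m_inv_notin: "x \<in> mV V \<Longrightarrow> x \<noteq> 0 \<Longrightarrow> inverse x \<notin> V"
  by (auto simp: mV_def unitV_def)

lemma m_power: "x \<in> mV V \<Longrightarrow> d \<ge> 1 \<Longrightarrow> x ^ d \<in> mV V"
proof (induct d)
  case 0 then show ?case by simp
next
  case (Suc d)
  then show ?case
    by (cases "d = 0") (auto intro: m_mult simp: m_sub[THEN subsetD] mult.commute)
qed

lemma pow_notin: "x \<notin> V \<Longrightarrow> d \<ge> 1 \<Longrightarrow> x ^ d \<notin> V"
proof
  assume x: "x \<notin> V" and d: "d \<ge> 1" and xd: "x ^ d \<in> V"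
  have "inverse x \<in> mV V" using notin_inv_m[OF x] .
  then have "inverse x ^ d \<in> mV V" using m_power d by blast
  moreover have "x \<noteq> 0" using x VS by auto
  ultimately have "inverse (inverse x ^ d) \<notin> V" using in_m_inv_notin by simp
  then show False using xd by (simp add: power_inverse)
qed

lemma unit_of_notin_m: "x \<in> V \<Longrightarrow> x \<notin> mV V \<Longrightarrow> unitV V x"
  by (simp add: mV_def)

end


interpretation fe: inj_idom_hom "frac_embed :: 'a::idom \<Rightarrow> 'a fract"
  by unfold_locales auto

abbreviation SS :: "'a::idom itself \<Rightarrow> 'a fract set" where "SS t \<equiv> integral_closure t"

lemma poly_fe_sum: "poly (map_poly frac_embed p) z = (\<Sum>i\<le>degree p. frac_embed (coeff p i) * z ^ i)"
  by (simp add: poly_altdef)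

lemma ic_iff: "z \<in> integral_closure TYPE('a::idom) \<longleftrightarrow>
   (\<exists>N c. (\<forall>j. c j \<in> (RR :: 'a fract set)) \<and> z ^ N = (\<Sum>j<N. c j * z ^ j))"
proof
  assume "z \<in> integral_closure TYPE('a)"
  then obtain p :: "'a poly" where p: "lead_coeff p = 1" "poly (map_poly frac_embed p) z = 0"
    by (auto simp: integral_closure_def)
  define N where "N = degree p"
  have "0 = (\<Sum>i\<le>N. frac_embed (coeff p i) * z ^ i)" using p(2) by (simp add: poly_fe_sum N_def)
  also have "\<dots> = (\<Sum>i<N. frac_embed (coeff p i) * z ^ i) + z ^ N"
    using p(1) by (simp add: lessThan_Suc_atMost[symmetric] N_def)
  finally have "z ^ N = (\<Sum>j<N. frac_embed (- coeff p j) * z ^ j)"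
    by (simp add: sum_negf eq_neg_iff_add_eq_0 add.commute)
  then show "\<exists>N c. (\<forall>j. c j \<in> (RR :: 'a fract set)) \<and> z ^ N = (\<Sum>j<N. c j * z ^ j)"
    by (intro exI[of _ N] exI[of _ "\<lambda>j. frac_embed (- coeff p j)"]) (simp only: RR_fe, simp)
next
  assume "\<exists>N c. (\<forall>j. c j \<in> (RR :: 'a fract set)) \<and> z ^ N = (\<Sum>j<N. c j * z ^ j)"
  then obtain N c where c: "\<forall>j. c j \<in> (RR :: 'a fract set)" "z ^ N = (\<Sum>j<N. c j * z ^ j)" by blast
  have "\<forall>j. \<exists>a. c j = frac_embed a" using c(1) by (auto simp: RR_def)
  then obtain c' where c': "\<And>j. c j = frac_embed (c' j)" by metis
  have N: "N \<ge> 1" using c(2) by (cases N) auto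
  define p :: "'a poly" where "p = monom 1 N - (\<Sum>j<N. monom (c' j) j)"
  have cp: "coeff p i = (if i = N then 1 else if i < N then - c' i else 0)" for i
    by (auto simp: p_def coeff_sum)
  have dle: "degree p \<le> N"
    by (rule degree_le) (auto simp: cp)
  have "degree p \<ge> N" by (rule le_degree) (simp add: cp)
  then have dN: "degree p = N" using dle by simp
  have lc: "lead_coeff p = 1" using dN cp by simp
  have "poly (map_poly frac_embed p) z = (\<Sum>i\<le>N. frac_embed (coeff p i) * z ^ i)"
    by (simp add: poly_fe_sum dN)
  also have "\<dots> = (\<Sum>i<N. frac_embed (coeff p i) * z ^ i) + z ^ N"
    by (simp add: lessThan_Suc_atMost[symmetric] cp)
  also have "(\<Sum>i<N. frac_embed (coeff p i) * z ^ i) = - (\<Sum>i<N. c i * z ^ i)"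
    by (simp add: cp c' sum_negf[symmetric])
  finally have "poly (map_poly frac_embed p) z = 0" using c(2) by simp
  with lc show "z \<in> integral_closure TYPE('a)" by (auto simp: integral_closure_def)
qed

lemma ic_in_vr:
  assumes V: "valuation_ring V" and R: "(RR :: 'a::idom fract set) \<subseteq> V"
    and z: "z \<in> integral_closure TYPE('a)"
  shows "z \<in> V"
proof (rule ccontr)
  assume zV: "z \<notin> V"
  from z obtain N c where c: "\<forall>j. c j \<in> (RR :: 'a fract set)" "z ^ N = (\<Sum>j<N. c j * z ^ j)"
    unfolding ic_iff by blast
  have z0: "z \<noteq> 0" using zV sr0[OF VS[OF V]] by auto
  define y where "y = inverse z"
  have y: "y \<in> mV V" using notin_inv_m[OF V zV] by (simp add: y_def)
  have "1 = (z ^ N) * y ^ N" using z0 by (simp add: y_def power_inverse[symmetric] field_simps)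
  also have "\<dots> = (\<Sum>j<N. c j * (z ^ j * y ^ N))" using c(2) by (simp add: sum_distrib_right mult.assoc)
  also have "\<dots> = (\<Sum>j<N. c j * y ^ (N - j))"
  proof (rule sum.cong[OF refl])
    fix j assume "j \<in> {..<N}"
    then have "y ^ N = y ^ j * y ^ (N - j)" by (simp add: power_add[symmetric])
    then show "c j * (z ^ j * y ^ N) = c j * y ^ (N - j)"
      using z0 by (simp add: y_def power_inverse[symmetric] field_simps)
  qed
  also have "\<dots> \<in> mV V"
  proof (rule m_sum[OF V])
    fix j assume "j \<in> {..<N}"
    then have "y ^ (N - j) \<in> mV V" using m_power[OF V y] by simp
    then show "c j * y ^ (N - j) \<in> mV V" using m_mult'[OF V] c(1) R by blast
  qed
  finally show False using m_1[OF V] by simp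
qed


lemma pigeon:
  assumes F: "finite F" and U: "\<And>i m m'. i \<in> F \<Longrightarrow> P i m \<Longrightarrow> P i m' \<Longrightarrow> m = m'"
  shows "\<exists>m \<in> {1..card F + 1}. \<forall>i\<in>F. \<not> P i m"
proof (rule ccontr)
  assume "\<not> ?thesis"
  then have sub: "{1..card F + 1} \<subseteq> (\<Union>i\<in>F. {m \<in> {1..card F + 1}. P i m})" by auto
  have "card (\<Union>i\<in>F. {m \<in> {1..card F + 1}. P i m}) \<le> (\<Sum>i\<in>F. card {m \<in> {1..card F + 1}. P i m})"
    by (rule card_UN_le[OF F])
  also have "\<dots> \<le> (\<Sum>i\<in>F. 1)"
  proof (rule sum_mono)
    fix i assume i: "i \<in> F"
    show "card {m \<in> {1..card F + 1}. P i m} \<le> 1"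
    proof -
      have fin: "finite {m \<in> {1..card F + 1}. P i m}" by simp
      have "card {m \<in> {1..card F + 1}. P i m} \<le> Suc 0"
        unfolding card_le_Suc0_iff_eq[OF fin] using U[OF i] by blast
      then show ?thesis by simp
    qed
  qed
  also have "\<dots> = card F" by simp
  finally have "card (\<Union>i\<in>F. {m \<in> {1..card F + 1}. P i m}) \<le> card F" .
  moreover have "card {1..card F + 1} \<le> card (\<Union>i\<in>F. {m \<in> {1..card F + 1}. P i m})"
    by (rule card_mono[OF _ sub]) (auto intro: F)
  ultimately show False by simp
qed

lemma unit_div_in: "subring V \<Longrightarrow> unitV V u \<Longrightarrow> unitV V w \<Longrightarrow> u / w \<in> V"
  by (auto simp: unitV_def divide_inverse intro: sr_mult)

lemma approx:
  assumes W: "valuation_ring (W :: 'k::field set)" and F: "finite F"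
    and inc: "\<forall>W'\<in>F. valuation_ring W' \<and> \<not> W \<subseteq> W' \<and> \<not> W' \<subseteq> W"
  shows "\<exists>c. c \<in> mV W \<and> (\<forall>W'\<in>F. c \<notin> W')"
  using F inc
proof (induct F rule: finite_induct)
  case empty
  then show ?case using m_0[OF W] by blast
next
  case (insert W' F)
  from insert obtain c where c: "c \<in> mV W" "\<forall>Wi\<in>F. c \<notin> Wi" by auto
  have W': "valuation_ring W'" "\<not> W \<subseteq> W'" "\<not> W' \<subseteq> W" using insert by auto
  have Fv: "\<And>Wi. Wi \<in> F \<Longrightarrow> valuation_ring Wi" using insert by auto
  from W'(2,3) obtain a d where ad: "a \<in> W" "a \<notin> W'" "d \<in> W'" "d \<notin> W" by auto
  define b where "b = a * inverse d"
  have d0: "d \<noteq> 0" using ad sr0[OF VS[OF W]] by auto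
  have bm: "b \<in> mV W" unfolding b_def using m_mult'[OF W notin_inv_m[OF W ad(4)] ad(1)] .
  have bO': "b \<notin> W'"
  proof
    assume "b \<in> W'"
    then have "b * d \<in> W'" using ad(3) sr_mult[OF VS[OF W'(1)]] by blast
    moreover have "b * d = a" using d0 by (simp add: b_def field_simps)
    ultimately show False using ad(2) by simp
  qed
  have b0: "b \<noteq> 0" using bO' sr0[OF VS[OF W'(1)]] by auto
  show ?case
  proof (cases "c \<in> W'")
    case False
    then show ?thesis using c by auto
  next
    case True
    have "\<exists>m \<in> {1..card F + 1}. \<forall>Wi\<in>F. \<not> unitV Wi (c ^ m / b)"
    proof (rule pigeon[OF insert(1)])
      fix Wi m m' assume Wi: "Wi \<in> F" and u1: "unitV Wi (c ^ m / b)" and u2: "unitV Wi (c ^ m' / b)"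
      have cO: "c \<notin> Wi" using c Wi by auto
      have c0: "c \<noteq> 0" using cO sr0[OF VS[OF Fv[OF Wi]]] by auto
      have gen: "False" if l: "k < k'" and v1: "unitV Wi (c ^ k / b)" and v2: "unitV Wi (c ^ k' / b)" for k k'
      proof -
        have "(c ^ k' / b) / (c ^ k / b) \<in> Wi" by (rule unit_div_in[OF VS[OF Fv[OF Wi]] v2 v1])
        moreover have "(c ^ k' / b) / (c ^ k / b) = c ^ (k' - k)"
          using l c0 b0 by (simp add: power_diff)
        ultimately have "c ^ (k' - k) \<in> Wi" by simp
        then show False using pow_notin[OF Fv[OF Wi] cO, of "k' - k"] l by simp
      qed
      show "m = m'"
        using gen[OF _ u1 u2] gen[OF _ u2 u1] by (cases m m' rule: linorder_cases) auto
    qed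
    then obtain m where m: "m \<ge> 1" "\<forall>Wi\<in>F. \<not> unitV Wi (c ^ m / b)" by auto
    define c' where "c' = c ^ m + b"
    have "c ^ m \<in> mV W" using m_power[OF W c(1) m(1)] .
    then have c'm: "c' \<in> mV W" using m_add[OF W _ bm] by (simp add: c'_def)
    have c'W': "c' \<notin> W'"
    proof
      assume "c' \<in> W'"
      moreover have "c ^ m \<in> W'" using True sr_power[OF VS[OF W'(1)]] by blast
      ultimately have "c' - c ^ m \<in> W'" using sr_diff[OF VS[OF W'(1)]] by blast
      then show False using bO' by (simp add: c'_def)
    qed
    have c'F: "c' \<notin> Wi" if Wi: "Wi \<in> F" for Wi
    proof -
      have V: "valuation_ring Wi" using Fv[OF Wi] .
      have cO: "c \<notin> Wi" using c Wi by auto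
      have c0: "c \<noteq> 0" using cO sr0[OF VS[OF V]] by auto
      have cmO: "c ^ m \<notin> Wi" using pow_notin[OF V cO m(1)] .
      define t where "t = c ^ m / b"
      have t0: "t \<noteq> 0" using c0 b0 by (simp add: t_def)
      have tnu: "\<not> unitV Wi t" using m(2) Wi by (simp add: t_def)
      from vr_cases[OF V t0] show ?thesis
      proof
        assume tO: "t \<in> Wi"
        then have tm: "t \<in> mV Wi" using tnu by (simp add: mV_def)
        have bnot: "b \<notin> Wi"
        proof
          assume "b \<in> Wi"
          then have "t * b \<in> Wi" using tO sr_mult[OF VS[OF V]] by blast
          then show False using cmO b0 by (simp add: t_def)
        qed
        have "c' = b * (1 + t)" using b0 by (simp add: c'_def t_def field_simps)
        then show ?thesis using unit_mult_notin[OF V bnot one_plus_m_unit[OF V tm]] by simp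
      next
        assume "inverse t \<in> Wi"
        have "t \<notin> Wi" using tnu t0 \<open>inverse t \<in> Wi\<close> by (auto simp: unitV_def)
        then have tm: "inverse t \<in> mV Wi" using notin_inv_m[OF V] by blast
        have "c' = c ^ m * (1 + inverse t)" using b0 c0 by (simp add: c'_def t_def field_simps)
        then show ?thesis using unit_mult_notin[OF V cmO one_plus_m_unit[OF V tm]] by simp
      qed
    qed
    show ?thesis using c'm c'W' c'F by auto
  qed
qed


definition spanR :: "nat set \<Rightarrow> (nat \<Rightarrow> 'a::idom fract) \<Rightarrow> 'a fract set" where
  "spanR J y = {\<Sum>j\<in>J. r j * y j | r. \<forall>j. r j \<in> RR}"

lemma RR_choice: "(\<forall>j. r j \<in> (RR :: 'a::idom fract set)) \<Longrightarrow> \<exists>c. \<forall>j. r j = frac_embed (c j)"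
proof -
  assume "\<forall>j. r j \<in> (RR :: 'a::idom fract set)"
  then have "\<forall>j. \<exists>a. r j = frac_embed a" by (auto simp: RR_def)
  then show ?thesis by metis
qed

lemma span_char:
  fixes y :: "nat \<Rightarrow> 'a::idom fract"
  assumes d0: "d \<noteq> 0" and dy: "\<And>j. j \<in> J \<Longrightarrow> frac_embed d * y j = frac_embed (x j)"
  shows "u \<in> spanR J y \<longleftrightarrow> frac_embed d * u \<in> frac_embed ` gen_ideal J x"
proof
  assume "u \<in> spanR J y"
  then obtain r where r: "\<forall>j. r j \<in> RR" "u = (\<Sum>j\<in>J. r j * y j)" by (auto simp: spanR_def)
  obtain c where c: "\<forall>j. r j = frac_embed (c j)" using RR_choice[OF r(1)] by blast
  have "frac_embed d * u = (\<Sum>j\<in>J. frac_embed (c j) * (frac_embed d * y j))"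
    by (simp add: r(2) c sum_distrib_left mult.assoc mult.left_commute)
  also have "\<dots> = frac_embed (\<Sum>j\<in>J. c j * x j)" by (simp add: dy fe_sum)
  finally show "frac_embed d * u \<in> frac_embed ` gen_ideal J x"
    by (auto simp: gen_ideal_def)
next
  assume "frac_embed d * u \<in> frac_embed ` gen_ideal J x"
  then obtain c where c: "frac_embed d * u = frac_embed (\<Sum>j\<in>J. c j * x j)"
    by (auto simp: gen_ideal_def)
  also have "\<dots> = (\<Sum>j\<in>J. frac_embed (c j) * (frac_embed d * y j))" by (simp add: dy fe_sum)
  also have "\<dots> = frac_embed d * (\<Sum>j\<in>J. frac_embed (c j) * y j)"
    by (simp add: sum_distrib_left mult.assoc mult.left_commute)
  finally have "u = (\<Sum>j\<in>J. frac_embed (c j) * y j)" using d0 by simp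
  then show "u \<in> spanR J y" unfolding spanR_def
    by (intro CollectI exI[of _ "\<lambda>j. frac_embed (c j)"]) auto
qed

lemma Kbreadth:
  assumes br: "breadth_le TYPE('a::idom) n"
  shows "\<exists>i\<le>n. spanR {..n} y = spanR ({..n}-{i}) (y :: nat \<Rightarrow> 'a fract)"
proof -
  have "\<forall>j. \<exists>a b. b \<noteq> 0 \<and> y j = frac_embed a / frac_embed b" using fract_exists by blast
  then obtain a b where ab: "\<And>j. b j \<noteq> (0::'a)" "\<And>j. y j = frac_embed (a j) / frac_embed (b j)" by metis
  define d where "d = prod b {..n}"
  define x where "x = (\<lambda>j. a j * prod b ({..n}-{j}))"
  have d0: "d \<noteq> 0" using ab(1) by (simp add: d_def)
  have dy: "frac_embed d * y j = frac_embed (x j)" if "j \<in> {..n}" for j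
  proof -
    have "d = b j * prod b ({..n}-{j})" using that by (simp add: d_def prod.remove)
    then show ?thesis using ab(1)[of j] by (simp add: ab(2) x_def field_simps)
  qed
  from br obtain i where i: "i \<le> n" "gen_ideal {..n} x = gen_ideal ({..n}-{i}) x"
    unfolding breadth_le_def by blast
  have "spanR {..n} y = spanR ({..n}-{i}) y"
  proof (rule Set.set_eqI)
    fix u
    show "u \<in> spanR {..n} y \<longleftrightarrow> u \<in> spanR ({..n}-{i}) y"
    proof -
      have c1: "u \<in> spanR {..n} y \<longleftrightarrow> frac_embed d * u \<in> frac_embed ` gen_ideal {..n} x"
        by (rule span_char[OF d0]) (rule dy)
      have c2: "u \<in> spanR ({..n}-{i}) y \<longleftrightarrow> frac_embed d * u \<in> frac_embed ` gen_ideal ({..n}-{i}) x"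
        by (rule span_char[OF d0]) (rule dy, auto)
      show ?thesis using c1 c2 i(2) by simp
    qed
  qed
  then show ?thesis using i(1) by blast
qed

lemma span_cong: "(\<And>j. j \<in> J \<Longrightarrow> g j = h j) \<Longrightarrow> spanR J g = spanR J h"
  unfolding spanR_def by (metis (no_types, lifting) sum.cong)

lemma span_Suc: "spanR {..<Suc N} g = {u + r * g N | u r. u \<in> spanR {..<N} g \<and> r \<in> RR}"
proof (rule Set.set_eqI, rule iffI)
  fix v assume "v \<in> spanR {..<Suc N} g"
  then obtain r where r: "\<forall>j. r j \<in> RR" "v = (\<Sum>j<Suc N. r j * g j)" by (auto simp: spanR_def)
  then show "v \<in> {u + r * g N | u r. u \<in> spanR {..<N} g \<and> r \<in> RR}"
    by (auto simp: spanR_def)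
next
  fix v assume "v \<in> {u + r * g N | u r. u \<in> spanR {..<N} g \<and> r \<in> RR}"
  then obtain r r0 where r: "\<forall>j. r j \<in> RR" "r0 \<in> RR" "v = (\<Sum>j<N. r j * g j) + r0 * g N"
    by (auto simp: spanR_def)
  have "v = (\<Sum>j<Suc N. (r(N := r0)) j * g j)"
    using r(3) by simp
  then show "v \<in> spanR {..<Suc N} g" using r(1,2) unfolding spanR_def
    by (intro CollectI exI[of _ "r(N := r0)"]) auto
qed

definition sk :: "nat \<Rightarrow> nat \<Rightarrow> nat" where "sk i j = (if j < i then j else Suc j)"

lemma sk_bij: "i \<le> n \<Longrightarrow> bij_betw (sk i) {..<n} ({..n}-{i})"
proof (rule bij_betw_imageI)
  show "inj_on (sk i) {..<n}" by (auto simp: inj_on_def sk_def split: if_splits)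
  assume i: "i \<le> n"
  show "sk i ` {..<n} = {..n} - {i}"
  proof (rule Set.set_eqI, rule iffI)
    fix x assume "x \<in> sk i ` {..<n}" then show "x \<in> {..n} - {i}" by (auto simp: sk_def)
  next
    fix x assume x: "x \<in> {..n} - {i}"
    show "x \<in> sk i ` {..<n}"
    proof (cases "x < i")
      case True then show ?thesis using i by (auto simp: sk_def intro!: image_eqI[of _ _ x])
    next
      case False then have "x = sk i (x - 1)" "x - 1 < n" using x by (auto simp: sk_def)
      then show ?thesis by blast
    qed
  qed
qed

lemma span_skip:
  assumes i: "i \<le> n"
  shows "spanR ({..n}-{i}) y = spanR {..<n} (\<lambda>j. y (sk i j))"
proof -
  have ri: "(\<Sum>j\<in>{..n}-{i}. r j * y j) = (\<Sum>j<n. r (sk i j) * y (sk i j))" for r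
    using sum.reindex_bij_betw[OF sk_bij[OF i], of "\<lambda>j. r j * y j"] by simp
  define us where "us = (\<lambda>j. if j < i then j else j - 1)"
  have us: "us (sk i j) = j" for j by (simp add: us_def sk_def)
  show ?thesis
  proof (rule Set.set_eqI, rule iffI)
    fix v assume "v \<in> spanR ({..n}-{i}) y"
    then obtain r where "\<forall>j. r j \<in> RR" "v = (\<Sum>j\<in>{..n}-{i}. r j * y j)" by (auto simp: spanR_def)
    then show "v \<in> spanR {..<n} (\<lambda>j. y (sk i j))" unfolding spanR_def ri
      by (intro CollectI exI[of _ "\<lambda>j. r (sk i j)"]) auto
  next
    fix v assume "v \<in> spanR {..<n} (\<lambda>j. y (sk i j))"
    then obtain r where r: "\<forall>j. r j \<in> RR" "v = (\<Sum>j<n. r j * y (sk i j))" by (auto simp: spanR_def)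
    have "v = (\<Sum>j\<in>{..n}-{i}. r (us j) * y j)" unfolding ri us r(2) ..
    then show "v \<in> spanR ({..n}-{i}) y" unfolding spanR_def using r(1)
      by (intro CollectI exI[of _ "\<lambda>j. r (us j)"]) auto
  qed
qed

lemma red:
  assumes br: "breadth_le TYPE('a::idom) n"
  shows "\<exists>m h. m \<le> n \<and> spanR {..<N} g = spanR {..<m} (h :: nat \<Rightarrow> 'a fract)"
proof (induct N)
  case 0 then show ?case by (intro exI[of _ 0] exI[of _ g]) simp
next
  case (Suc N)
  then obtain m h where mh: "m \<le> n" "spanR {..<N} g = spanR {..<m} h" by blast
  define h' where "h' = h(m := g N)"
  have "spanR {..<Suc N} g = {u + r * h' m | u r. u \<in> spanR {..<m} h' \<and> r \<in> RR}"
    unfolding span_Suc mh(2) using span_cong[of "{..<m}" h h'] by (simp add: h'_def)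
  also have "\<dots> = spanR {..<Suc m} h'" unfolding span_Suc ..
  finally have eq: "spanR {..<Suc N} g = spanR {..<Suc m} h'" .
  show ?case
  proof (cases "m < n")
    case True then show ?thesis using eq by (intro exI[of _ "Suc m"] exI[of _ h']) auto
  next
    case False
    then have mn: "m = n" using mh(1) by simp
    obtain i where i: "i \<le> n" "spanR {..n} h' = spanR ({..n}-{i}) h'" using Kbreadth[OF br] by blast
    have "spanR {..<Suc N} g = spanR {..<n} (\<lambda>j. h' (sk i j))"
      using eq mn i span_skip[OF i(1)] by (simp add: lessThan_Suc_atMost)
    then show ?thesis by blast
  qed
qed

lemma span_add: "u \<in> spanR J y \<Longrightarrow> v \<in> spanR J y \<Longrightarrow> u + v \<in> spanR J y"
proof -
  assume "u \<in> spanR J y" "v \<in> spanR J y"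
  then obtain r s where r: "\<forall>j. r j \<in> RR" "u = (\<Sum>j\<in>J. r j * y j)" and
    s: "\<forall>j. s j \<in> RR" "v = (\<Sum>j\<in>J. s j * y j)" by (auto simp: spanR_def)
  have "u + v = (\<Sum>j\<in>J. (r j + s j) * y j)" by (simp add: r s sum.distrib distrib_right)
  then show ?thesis unfolding spanR_def using r s RR_add
    by (intro CollectI exI[of _ "\<lambda>j. r j + s j"]) auto
qed

lemma span_smult: "s \<in> RR \<Longrightarrow> u \<in> spanR J y \<Longrightarrow> s * u \<in> spanR J y"
proof -
  assume s: "s \<in> RR" and "u \<in> spanR J y"
  then obtain r where r: "\<forall>j. r j \<in> RR" "u = (\<Sum>j\<in>J. r j * y j)" by (auto simp: spanR_def)
  have "s * u = (\<Sum>j\<in>J. (s * r j) * y j)" by (simp add: r sum_distrib_left mult.assoc)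
  then show ?thesis unfolding spanR_def using r s RR_mult
    by (intro CollectI exI[of _ "\<lambda>j. s * r j"]) auto
qed

lemma span_0: "0 \<in> spanR J y"
  unfolding spanR_def by (intro CollectI exI[of _ "\<lambda>j. 0"]) auto

lemma span_lincomb:
  "finite I \<Longrightarrow> (\<And>i. i \<in> I \<Longrightarrow> v i \<in> spanR J y) \<Longrightarrow> (\<And>i. s i \<in> RR) \<Longrightarrow>
     (\<Sum>i\<in>I. s i * v i) \<in> spanR J y"
  by (induct I rule: finite_induct) (auto intro: span_add span_smult span_0)

lemma span_basis: "finite J \<Longrightarrow> j \<in> J \<Longrightarrow> y j \<in> spanR J y"
proof -
  assume J: "finite J" "j \<in> J"
  have "(\<Sum>k\<in>J. (if k = j then 1 else 0) * y k) = y j"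
    using J by (simp add: if_distrib[of "\<lambda>x. x * _"] cong: if_cong)
  then show ?thesis unfolding spanR_def
    by (intro CollectI exI[of _ "\<lambda>k. if k = j then 1 else 0"]) auto
qed


interpretation fep: map_poly_comm_ring_hom "frac_embed :: 'a::idom \<Rightarrow> 'a fract" ..

definition Tn :: "nat \<Rightarrow> 'a::idom fract \<Rightarrow> bool" where
  "Tn n z \<longleftrightarrow> (\<exists>c. (\<forall>j. c j \<in> (RR :: 'a fract set)) \<and> z ^ n = (\<Sum>j<n. c j * z ^ j))"

lemma mon_Tn:
  fixes p :: "'a::idom poly"
  assumes p: "lead_coeff p = 1" "degree p = n" "poly (map_poly frac_embed p) z = 0"
  shows "Tn n z"
proof -
  have "0 = (\<Sum>i\<le>n. frac_embed (coeff p i) * z ^ i)" using p(2,3) by (simp add: poly_fe_sum)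
  also have "\<dots> = (\<Sum>i<n. frac_embed (coeff p i) * z ^ i) + z ^ n"
    using p(1,2) by (simp add: lessThan_Suc_atMost[symmetric])
  finally have "z ^ n = (\<Sum>j<n. frac_embed (- coeff p j) * z ^ j)"
    by (simp add: sum_negf eq_neg_iff_add_eq_0 add.commute)
  then show ?thesis unfolding Tn_def
    by (intro exI[of _ "\<lambda>j. frac_embed (- coeff p j)"]) (simp only: RR_fe, simp)
qed

lemma Tn_S: "n \<ge> 1 \<Longrightarrow> Tn n z \<Longrightarrow> z \<in> integral_closure TYPE('a::idom)"
  unfolding ic_iff Tn_def by blast

lemma S_Tn:
  assumes br: "breadth_le TYPE('a::idom) n" and z: "z \<in> integral_closure TYPE('a)"
  shows "Tn n z"
proof -
  from z obtain N c where c: "\<forall>j. c j \<in> (RR :: 'a fract set)" "z ^ N = (\<Sum>j<N. c j * z ^ j)"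
    unfolding ic_iff by blast
  have N: "N \<ge> 1" using c(2) by (cases N) auto
  define g where "g = (\<lambda>j. z ^ j)"
  define M where "M = spanR {..<N} g"
  have zg: "z * g j \<in> M" if j: "j < N" for j
  proof (cases "Suc j < N")
    case True
    then show ?thesis unfolding M_def using span_basis[of "{..<N}" "Suc j" g] by (simp add: g_def)
  next
    case False
    then have "Suc j = N" using j by simp
    have "z * g j = z ^ Suc j" by (simp add: g_def)
    also have "\<dots> = z ^ N" using \<open>Suc j = N\<close> by simp
    also have "\<dots> = (\<Sum>k<N. c k * g k)" unfolding c(2) g_def ..
    finally have "z * g j = (\<Sum>k<N. c k * g k)" .
    then show ?thesis unfolding M_def spanR_def using c(1) by blast
  qed
  have zM: "z * u \<in> M" if u: "u \<in> M" for u
  proof -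
    from u obtain r where r: "\<forall>j. r j \<in> RR" "u = (\<Sum>j<N. r j * g j)" by (auto simp: M_def spanR_def)
    have "z * u = (\<Sum>j<N. r j * (z * g j))" by (simp add: r(2) sum_distrib_left mult.left_commute)
    also have "\<dots> \<in> M" unfolding M_def by (rule span_lincomb) (use zg r(1) in \<open>auto simp: M_def\<close>)
    finally show ?thesis .
  qed
  have oneM: "1 \<in> M" using span_basis[of "{..<N}" 0 g] N by (simp add: M_def g_def)
  obtain m h where mh: "m \<le> n" "M = spanR {..<m} (h :: nat \<Rightarrow> 'a fract)"
    using red[OF br, of N g] by (auto simp: M_def)
  have "\<forall>i<m. \<exists>r. (\<forall>j. r j \<in> RR) \<and> z * h i = (\<Sum>j<m. r j * h j)"
  proof (intro allI impI)
    fix i assume "i < m"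
    then have "h i \<in> M" using span_basis[of "{..<m}" i h] mh(2) by simp
    then have "z * h i \<in> spanR {..<m} h" using zM mh(2) by simp
    then show "\<exists>r. (\<forall>j. r j \<in> RR) \<and> z * h i = (\<Sum>j<m. r j * h j)" by (auto simp: spanR_def)
  qed
  then have "\<forall>i<m. \<exists>a. z * h i = (\<Sum>j<m. frac_embed (a j) * h j)"
  proof (intro allI impI)
    fix i assume "i < m"
    with \<open>\<forall>i<m. \<exists>r. (\<forall>j. r j \<in> RR) \<and> z * h i = (\<Sum>j<m. r j * h j)\<close>
    obtain r where r: "\<forall>j. r j \<in> RR" "z * h i = (\<Sum>j<m. r j * h j)" by blast
    obtain a where "\<forall>j. r j = frac_embed (a j)" using RR_choice[OF r(1)] by blast
    then show "\<exists>a. z * h i = (\<Sum>j<m. frac_embed (a j) * h j)" using r(2) by auto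
  qed
  then obtain A' :: "nat \<Rightarrow> nat \<Rightarrow> 'a" where A': "\<And>i. i < m \<Longrightarrow> z * h i = (\<Sum>j<m. frac_embed (A' i j) * h j)"
    by metis
  have hnz: "\<exists>i<m. h i \<noteq> 0"
  proof (rule ccontr)
    assume "\<not> ?thesis"
    then have "\<forall>u \<in> spanR {..<m} h. u = 0" by (auto simp: spanR_def)
    then show False using oneM mh(2) by auto
  qed
  define B :: "'a mat" where "B = mat m m (\<lambda>(i,j). A' i j)"
  define A where "A = map_mat frac_embed B"
  define v where "v = vec m h"
  have Bc: "B \<in> carrier_mat m m" by (simp add: B_def)
  have Ac: "A \<in> carrier_mat m m" by (simp add: A_def B_def)
  have Av: "A *\<^sub>v v = z \<cdot>\<^sub>v v"
  proof (rule eq_vecI)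
    fix i assume "i < dim_vec (z \<cdot>\<^sub>v v)"
    then have i: "i < m" by (simp add: v_def)
    have "(A *\<^sub>v v) $ i = (\<Sum>j\<in>{0..<m}. frac_embed (A' i j) * h j)"
      using i by (simp add: A_def B_def v_def mult_mat_vec_def scalar_prod_def)
    also have "\<dots> = z * h i" using A'[OF i] by (simp add: atLeast0LessThan)
    finally show "(A *\<^sub>v v) $ i = (z \<cdot>\<^sub>v v) $ i" using i by (simp add: v_def)
  qed (simp add: A_def B_def v_def)
  have "eigenvector A v z" unfolding eigenvector_def
  proof (intro conjI)
    show "v \<in> carrier_vec (dim_row A)" by (simp add: v_def A_def B_def)
    show "v \<noteq> 0\<^sub>v (dim_row A)"
    proof
      assume "v = 0\<^sub>v (dim_row A)"
      then have "\<forall>i<m. h i = 0" by (metis (no_types, lifting) A_def B_def dim_row_mat(1) index_map_mat(2) index_vec index_zero_vec(1) v_def)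
      then show False using hnz by auto
    qed
    show "A *\<^sub>v v = z \<cdot>\<^sub>v v" by (rule Av)
  qed
  then have "eigenvalue A z" by (auto simp: eigenvalue_def)
  then have root: "poly (char_poly A) z = 0" using eigenvalue_root_char_poly[OF Ac] by simp
  have cpA: "char_poly A = map_poly frac_embed (char_poly B)"
    unfolding A_def by (rule fe.char_poly_hom[OF Bc])
  define P where "P = monom 1 (n - m) * char_poly B"
  have dB: "degree (char_poly B) = m" "coeff (char_poly B) m = 1" using degree_monic_char_poly[OF Bc] by auto
  have B0: "char_poly B \<noteq> 0" using dB by auto
  have dP: "degree P = n" using dB B0 mh(1) by (simp add: P_def degree_mult_eq degree_monom_eq)
  have lP: "lead_coeff P = 1" using dB by (simp add: P_def lead_coeff_mult lead_coeff_monom degree_monom_eq)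
  have "poly (map_poly frac_embed P) z = z ^ (n - m) * poly (char_poly A) z"
    by (simp add: P_def cpA fep.hom_mult poly_monom)
  then have "poly (map_poly frac_embed P) z = 0" using root by simp
  then show ?thesis using mon_Tn[OF lP dP] by blast
qed


definition adjoin :: "'k::field set \<Rightarrow> 'k \<Rightarrow> 'k set" where
  "adjoin B y = {poly p y | p. \<forall>i. coeff p i \<in> B}"

lemma adjoin_subring:
  assumes B: "subring B"
  shows "subring (adjoin B y)" "B \<subseteq> adjoin B y" "y \<in> adjoin B y"
proof -
  have c0: "\<forall>i. coeff 0 i \<in> B" using B by simp
  have c1: "\<forall>i. coeff 1 i \<in> B" using B by (simp add: coeff_1)
  have cadd: "\<forall>i. coeff (p + q) i \<in> B" if "\<forall>i. coeff p i \<in> B" "\<forall>i. coeff q i \<in> B" for p q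
    using that B by (auto intro: sr_add)
  have cneg: "\<forall>i. coeff (- p) i \<in> B" if "\<forall>i. coeff p i \<in> B" for p
    using that B by auto
  have cmul: "\<forall>i. coeff (p * q) i \<in> B" if "\<forall>i. coeff p i \<in> B" "\<forall>i. coeff q i \<in> B" for p q
    using that B by (auto simp: coeff_mult intro!: sr_sum sr_mult)
  show "subring (adjoin B y)" unfolding subring_def adjoin_def
  proof (intro conjI ballI)
    show "0 \<in> {poly p y |p. \<forall>i. coeff p i \<in> B}" using c0 by (auto intro!: exI[of _ 0])
    show "1 \<in> {poly p y |p. \<forall>i. coeff p i \<in> B}" using c1 by (auto intro!: exI[of _ 1])
    fix u v assume u: "u \<in> {poly p y |p. \<forall>i. coeff p i \<in> B}" and v: "v \<in> {poly p y |p. \<forall>i. coeff p i \<in> B}"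
    then obtain p q where p: "\<forall>i. coeff p i \<in> B" "u = poly p y" and q: "\<forall>i. coeff q i \<in> B" "v = poly q y" by auto
    show "u + v \<in> {poly p y |p. \<forall>i. coeff p i \<in> B}"
      using cadd[OF p(1) q(1)] p q by (auto intro!: exI[of _ "p + q"])
    show "- u \<in> {poly p y |p. \<forall>i. coeff p i \<in> B}"
      using cneg[OF p(1)] p by (auto intro!: exI[of _ "- p"])
    show "u * v \<in> {poly p y |p. \<forall>i. coeff p i \<in> B}"
      using cmul[OF p(1) q(1)] p q by (auto intro!: exI[of _ "p * q"])
  qed
  show "B \<subseteq> adjoin B y"
  proof
    fix b assume b: "b \<in> B"
    have "\<forall>i. coeff [:b:] i \<in> B" using b B by (simp add: coeff_pCons split: nat.splits)
    then show "b \<in> adjoin B y" unfolding adjoin_def by (auto intro!: exI[of _ "[:b:]"])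
  qed
  have "\<forall>i. coeff (monom 1 1) i \<in> B" using B by (simp add: coeff_monom)
  moreover have "poly (monom 1 1) y = y" by (simp add: poly_monom)
  ultimately show "y \<in> adjoin B y" unfolding adjoin_def by (intro CollectI exI[of _ "monom 1 1"]) simp
qed

lemma RR_subring: "subring (RR :: 'a::idom fract set)"
  by (simp add: subring_def RR_add RR_mult RR_minus)

lemma poly_sum_le: "poly (p :: 'k::field poly) y = (\<Sum>i\<le>degree p. coeff p i * y ^ i)"
  by (simp add: poly_altdef)

lemma notS_not_adj:
  assumes z: "z \<notin> integral_closure TYPE('a::idom)"
  shows "z \<notin> adjoin (RR :: 'a fract set) (inverse z)"
proof
  assume "z \<in> adjoin RR (inverse z)"
  then obtain p where p: "\<forall>i. coeff p i \<in> (RR :: 'a fract set)" "z = poly p (inverse z)"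
    unfolding adjoin_def by blast
  have z0: "z \<noteq> 0"
  proof
    assume "z = 0"
    then have "z \<in> integral_closure TYPE('a)" unfolding ic_iff
      by (intro exI[of _ 1] exI[of _ "\<lambda>_. 0"]) simp
    then show False using z by simp
  qed
  define N where "N = degree p"
  have "z ^ Suc N = z ^ N * z" by simp
  also have "\<dots> = z ^ N * poly p (inverse z)" by (rule arg_cong[where f = "\<lambda>t. z ^ N * t"], rule p(2))
  also have "\<dots> = (\<Sum>i\<le>N. coeff p i * (z ^ N * inverse z ^ i))"
    by (simp add: poly_sum_le N_def sum_distrib_left mult.left_commute)
  also have "\<dots> = (\<Sum>i\<le>N. coeff p i * z ^ (N - i))"
  proof (rule sum.cong[OF refl])
    fix i assume "i \<in> {..N}"
    then have "z ^ N = z ^ (N - i) * z ^ i" by (simp add: power_add[symmetric])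
    then show "coeff p i * (z ^ N * inverse z ^ i) = coeff p i * z ^ (N - i)"
      using z0 by (simp add: power_inverse[symmetric] field_simps)
  qed
  also have "\<dots> = (\<Sum>i\<le>N. coeff p (N + 0 - i) * z ^ (N - (N + 0 - i)))"
    unfolding atMost_atLeast0 by (rule sum.atLeastAtMost_rev)
  also have "\<dots> = (\<Sum>i\<le>N. coeff p (N - i) * z ^ i)" by (rule sum.cong) auto
  also have "\<dots> = (\<Sum>i<Suc N. coeff p (N - i) * z ^ i)" by (simp add: lessThan_Suc_atMost)
  finally have eq: "z ^ Suc N = (\<Sum>i<Suc N. coeff p (N - i) * z ^ i)" .
  have "z \<in> integral_closure TYPE('a)" unfolding ic_iff
    by (intro exI[of _ "Suc N"] exI[of _ "\<lambda>i. coeff p (N - i)"] conjI allI eq p(1)[rule_format])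
  then show False using z by simp
qed

context
  fixes z :: "'k::field" and B :: "'k set"
  assumes z0: "z \<noteq> 0"
    and Bs: "subring B" and wB: "inverse z \<in> B" and zB: "z \<notin> B"
    and maxB: "\<And>y. z \<notin> adjoin B y \<Longrightarrow> y \<in> B"
begin

abbreviation w where "w \<equiv> inverse z"

definition II where "II = (\<lambda>b. w * b) ` B"

lemma II_B: "c \<in> II \<Longrightarrow> c \<in> B" using sr_mult[OF Bs] wB by (auto simp: II_def)
lemma II_0: "0 \<in> II" using Bs by (auto simp: II_def intro!: image_eqI[of _ _ 0])
lemma II_add: "c \<in> II \<Longrightarrow> d \<in> II \<Longrightarrow> c + d \<in> II"
  using sr_add[OF Bs] by (auto simp: II_def distrib_left[symmetric] intro!: imageI)
lemma II_diff: "c \<in> II \<Longrightarrow> d \<in> II \<Longrightarrow> c - d \<in> II"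
  using sr_diff[OF Bs] by (auto simp: II_def right_diff_distrib[symmetric] intro!: imageI)
lemma II_mult: "c \<in> II \<Longrightarrow> b \<in> B \<Longrightarrow> b * c \<in> II"
  using sr_mult[OF Bs] by (auto simp: II_def mult.left_commute intro!: imageI)
lemma II_1: "1 \<notin> II"
proof
  assume "1 \<in> II"
  then obtain b where b: "b \<in> B" "1 = w * b" by (auto simp: II_def)
  then have "b = z" using z0 by (simp add: field_simps)
  then show False using b zB by simp
qed
lemma II_sum: "(\<And>i. i \<in> A \<Longrightarrow> f i \<in> II) \<Longrightarrow> sum f A \<in> II"
  by (induct A rule: infinite_finite_induct) (auto intro: II_add II_0)

lemma pow_one_minus: "b \<in> B \<Longrightarrow> \<exists>t\<in>B. (1 - w * b) ^ k = 1 - w * t"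
proof (induct k)
  case 0 then show ?case using Bs by (intro bexI[of _ 0]) auto
next
  case (Suc k)
  then obtain t where t: "t \<in> B" "(1 - w * b) ^ k = 1 - w * t" by blast
  have "(1 - w * b) ^ Suc k = (1 - w * t) * (1 - w * b)" using t(2) by (simp add: mult.commute)
  also have "\<dots> = 1 - w * (t + b - w * t * b)" by (simp add: algebra_simps)
  finally have "(1 - w * b) ^ Suc k = 1 - w * (t + b - w * t * b)" .
  moreover have "t + b - w * t * b \<in> B" using t(1) Suc(2) sr_add[OF Bs] sr_diff[OF Bs] sr_mult[OF Bs] wB by metis
  ultimately show ?case by blast
qed

lemma one_minus_unit:
  assumes c: "c \<in> II" shows "1 - c \<noteq> 0" "inverse (1 - c) \<in> B"
proof -
  show s0: "1 - c \<noteq> 0" using c II_1 by auto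
  obtain b where b: "b \<in> B" "c = w * b" using c by (auto simp: II_def)
  define s where "s = 1 - c"
  have "z \<notin> adjoin B (inverse s)"
  proof
    assume "z \<in> adjoin B (inverse s)"
    then obtain p where p: "\<forall>i. coeff p i \<in> B" "z = poly p (inverse s)" by (auto simp: adjoin_def)
    define N where "N = degree p"
    have sne: "s \<noteq> 0" using s0 by (simp add: s_def)
    have "z * s ^ N = (\<Sum>i\<le>N. coeff p i * (s ^ N * inverse s ^ i))"
      by (subst p(2)) (simp add: poly_sum_le N_def sum_distrib_left mult.commute mult.left_commute)
    also have "\<dots> = (\<Sum>i\<le>N. coeff p i * s ^ (N - i))"
    proof (rule sum.cong[OF refl])
      fix i assume "i \<in> {..N}"
      then have "s ^ N = s ^ (N - i) * s ^ i" by (simp add: power_add[symmetric])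
      then show "coeff p i * (s ^ N * inverse s ^ i) = coeff p i * s ^ (N - i)"
        using sne by (simp add: power_inverse[symmetric] field_simps)
    qed
    finally have eq: "z * s ^ N = (\<Sum>i\<le>N. coeff p i * s ^ (N - i))" .
    have sB: "s \<in> B" using b Bs wB by (auto simp: s_def intro!: sr_diff sr_mult)
    define t where "t = (\<Sum>i\<le>N. coeff p i * s ^ (N - i))"
    have tB: "t \<in> B" unfolding t_def using p(1) sB Bs by (auto intro!: sr_sum sr_mult sr_power)
    obtain tN where tN: "tN \<in> B" "s ^ N = 1 - w * tN" using pow_one_minus[OF b(1), of N] b(2) by (auto simp: s_def)
    have "s ^ N = w * t" using eq z0 by (simp add: t_def[symmetric] field_simps)
    then have "1 = w * (t + tN)" using tN(2) by (simp add: algebra_simps)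
    then have "z = t + tN" using z0 by (simp add: field_simps)
    then show False using zB tB tN(1) Bs by (auto intro: sr_add)
  qed
  then show "inverse (1 - c) \<in> B" using maxB by (simp add: s_def)
qed

definition good where
  "good y d \<longleftrightarrow> (\<exists>P. degree P = d \<and> (\<forall>i. coeff P i \<in> II) \<and> poly P y = 1)"

lemma good_pos: "good y d \<Longrightarrow> d \<ge> 1"
proof (rule ccontr)
  assume "good y d" "\<not> d \<ge> 1"
  then obtain P where P: "degree P = d" "\<forall>i. coeff P i \<in> II" "poly P y = 1" by (auto simp: good_def)
  then have "degree P = 0" using \<open>\<not> d \<ge> 1\<close> by simp
  then have "poly P y = coeff P 0" by (simp add: poly_sum_le)
  then have "coeff P 0 = 1" using P(3) by simp
  moreover have "coeff P 0 \<in> II" using P(2) by blast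
  ultimately show False using II_1 by simp
qed

lemma reduce:
  assumes y0: "y \<noteq> 0" and gp: "good y p" and gq: "good (inverse y) q" and qp: "q \<le> p"
  shows "\<exists>p' < p. good y p'"
proof -
  have p1: "p \<ge> 1" using good_pos[OF gp] .
  obtain P where P: "degree P = p" "\<forall>i. coeff P i \<in> II" "poly P y = 1" using gp by (auto simp: good_def)
  obtain Q where Q: "degree Q = q" "\<forall>i. coeff Q i \<in> II" "poly Q (inverse y) = 1" using gq by (auto simp: good_def)
  define c where "c = coeff Q"
  define a where "a = coeff P p"
  define u where "u = inverse (1 - c 0)"
  have cI: "c j \<in> II" for j using Q(2) by (simp add: c_def)
  have aI: "a \<in> II" using P(2) by (simp add: a_def)
  have uB: "u \<in> B" using one_minus_unit[OF cI[of 0]] by (simp add: u_def)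
  have u1: "u * (1 - c 0) = 1" using one_minus_unit[OF cI[of 0]] by (simp add: u_def)
  have "1 = (\<Sum>j\<le>q. c j * inverse y ^ j)" using Q(1,3) by (simp add: poly_sum_le c_def)
  also have "{..q} = insert 0 {1..q}" by auto
  finally have "1 = c 0 + (\<Sum>j\<in>{1..q}. c j * inverse y ^ j)" by simp
  then have eqQ: "1 - c 0 = (\<Sum>j\<in>{1..q}. c j * inverse y ^ j)" by (metis add_diff_cancel_left')
  have "(\<Sum>j\<in>{1..q}. c j * y ^ (p - j)) = y ^ p * (\<Sum>j\<in>{1..q}. c j * inverse y ^ j)"
    unfolding sum_distrib_left
  proof (rule sum.cong[OF refl])
    fix j assume "j \<in> {1..q}"
    then have "y ^ p = y ^ (p - j) * y ^ j" using qp by (simp add: power_add[symmetric])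
    then show "c j * y ^ (p - j) = y ^ p * (c j * inverse y ^ j)"
      using y0 by (simp add: power_inverse[symmetric] field_simps)
  qed
  also have "\<dots> = y ^ p * (1 - c 0)" using eqQ by simp
  finally have key: "a * u * (\<Sum>j\<in>{1..q}. c j * y ^ (p - j)) = a * y ^ p"
    using u1 by (simp add: mult.commute mult.left_commute)
  define P' where "P' = P - monom a p + (\<Sum>j\<in>{1..q}. monom (a * u * c j) (p - j))"
  have cP': "coeff P' i = coeff P i - (if i = p then a else 0) + (\<Sum>j\<in>{1..q}. if p - j = i then a * u * c j else 0)" for i
    by (simp add: P'_def coeff_sum coeff_monom)
  have "poly P' y = poly P y - a * y ^ p + (\<Sum>j\<in>{1..q}. a * u * c j * y ^ (p - j))"
    by (simp add: P'_def poly_sum poly_monom)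
  also have "(\<Sum>j\<in>{1..q}. a * u * c j * y ^ (p - j)) = a * u * (\<Sum>j\<in>{1..q}. c j * y ^ (p - j))"
    by (simp add: sum_distrib_left mult.assoc)
  finally have polyP': "poly P' y = 1" using key P(3) by simp
  have coefP': "coeff P' i \<in> II" for i
  proof -
    have "a * u * c j \<in> II" for j
    proof -
      have "a * u \<in> B" using aI uB Bs by (auto intro: II_B sr_mult)
      then show ?thesis by (rule II_mult[OF cI[of j]])
    qed
    then show ?thesis unfolding cP' using P(2) aI II_0
      by (auto intro!: II_add II_diff II_sum)
  qed
  have "degree P' \<le> p - 1"
  proof (rule degree_le, intro allI impI)
    fix i assume i: "p - 1 < i"
    show "coeff P' i = 0"
    proof (cases "i = p")
      case True
      have "(\<Sum>j\<in>{1..q}. if p - j = i then a * u * c j else (0::'k)) = 0"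
        using True p1 by (intro sum.neutral) auto
      then show ?thesis using True by (simp add: cP' a_def)
    next
      case False
      then have "i > p" using i by simp
      then have "coeff P i = 0" using P(1) by (simp add: coeff_eq_0)
      moreover have "(\<Sum>j\<in>{1..q}. if p - j = i then a * u * c j else (0::'k)) = 0"
        using \<open>i > p\<close> by (intro sum.neutral) auto
      ultimately show ?thesis using False by (simp add: cP')
    qed
  qed
  then have "degree P' < p" using p1 by simp
  moreover have "good y (degree P')" unfolding good_def using polyP' coefP' by blast
  ultimately show ?thesis by blast
qed

lemma not_both:
  assumes x0: "x \<noteq> 0" and gx: "good x p" and gx': "good (inverse x) q"
  shows False
proof -
  have "\<forall>p q. p + q = s \<longrightarrow> good x p \<longrightarrow> good (inverse x) q \<longrightarrow> False" for s
  proof (induct s rule: less_induct)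
    case (less s)
    show ?case
    proof (intro allI impI)
      fix p q assume s: "p + q = s" and g1: "good x p" and g2: "good (inverse x) q"
      show False
      proof (cases "q \<le> p")
        case True
        then obtain p' where "p' < p" "good x p'" using reduce[OF x0 g1 g2] by blast
        moreover have "p' + q < s" using \<open>p' < p\<close> s by simp
        ultimately show False using less(1)[of "p' + q"] g2 by blast
      next
        case False
        have g1': "good (inverse (inverse x)) p" using g1 by simp
        obtain q' where "q' < q" "good (inverse x) q'"
          using reduce[of "inverse x" q p] x0 g2 g1' False by auto
        moreover have "p + q' < s" using \<open>q' < q\<close> s by simp
        ultimately show False using less(1)[of "p + q'"] g1 by blast
      qed
    qed
  qed
  then show False using gx gx' by blast
qed




lemma in_adj_good:
  assumes "z \<in> adjoin B y" shows "\<exists>d. good y d"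
proof -
  obtain P where P: "\<forall>i. coeff P i \<in> B" "z = poly P y" using assms by (auto simp: adjoin_def)
  have "poly (Polynomial.smult w P) y = 1" using P(2) z0 by simp
  moreover have "\<forall>i. coeff (Polynomial.smult w P) i \<in> II" using P(1) by (auto simp: II_def)
  ultimately show ?thesis unfolding good_def by blast
qed

lemma maximal_is_vr: "valuation_ring B"
  unfolding vr_iff
proof (intro conjI allI impI)
  show "subring B" by (rule Bs)
  fix x :: 'k assume x0: "x \<noteq> 0"
  show "x \<in> B \<or> inverse x \<in> B"
  proof (rule ccontr)
    assume "\<not> (x \<in> B \<or> inverse x \<in> B)"
    then have "z \<in> adjoin B x" "z \<in> adjoin B (inverse x)" using maxB by blast+
    then obtain p q where "good x p" "good (inverse x) q" using in_adj_good by blast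
    then show False using not_both[OF x0] by blast
  qed
qed

end

lemma krull:
  assumes z: "z \<notin> integral_closure TYPE('a::idom)"
  shows "\<exists>V. valuation_ring V \<and> (RR :: 'a fract set) \<subseteq> V \<and> z \<notin> V"
proof -
  define w where "w = inverse z"
  have z0: "z \<noteq> 0"
  proof
    assume "z = 0"
    then have "z \<in> integral_closure TYPE('a)" unfolding ic_iff
      by (intro exI[of _ 1] exI[of _ "\<lambda>_. 0"]) simp
    then show False using z by simp
  qed
  define F where "F = {B. subring B \<and> (RR :: 'a fract set) \<subseteq> B \<and> w \<in> B \<and> z \<notin> B}"
  define A0 where "A0 = adjoin (RR :: 'a fract set) w"
  have A0F: "A0 \<in> F" unfolding F_def A0_def
    using adjoin_subring[OF RR_subring, of w] notS_not_adj[OF z] by (simp add: w_def)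
  have "\<exists>M\<in>F. \<forall>X\<in>F. M \<subseteq> X \<longrightarrow> X = M"
  proof (rule Zorn_Lemma2, intro ballI)
    fix C assume C: "C \<in> chains F"
    show "\<exists>U\<in>F. \<forall>X\<in>C. X \<subseteq> U"
    proof (cases "C = {}")
      case True then show ?thesis using A0F by auto
    next
      case False
      have CF: "C \<subseteq> F" and ch: "\<And>X Y. X \<in> C \<Longrightarrow> Y \<in> C \<Longrightarrow> X \<subseteq> Y \<or> Y \<subseteq> X"
        using C by (auto simp: chains_def chain_subset_def)
      have "\<Union>C \<in> F" unfolding F_def
      proof (intro CollectI conjI)
        obtain X0 where X0: "X0 \<in> C" using False by auto
        then have X0F: "X0 \<in> F" using CF by auto
        show "RR \<subseteq> \<Union>C" using X0 X0F by (auto simp: F_def)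
        show "w \<in> \<Union>C" using X0 X0F by (auto simp: F_def)
        show "z \<notin> \<Union>C" using CF by (auto simp: F_def)
        show "subring (\<Union>C)" unfolding subring_def
        proof (intro conjI ballI)
          have X0s: "subring X0" using X0F by (simp add: F_def)
          show "0 \<in> \<Union>C" "1 \<in> \<Union>C" using X0 sr0[OF X0s] sr1[OF X0s] by blast+
          fix x y assume x: "x \<in> \<Union>C" and y: "y \<in> \<Union>C"
          then obtain X Y where XY: "X \<in> C" "Y \<in> C" "x \<in> X" "y \<in> Y" by auto
          then have XYs: "subring X" "subring Y" using CF by (auto simp: F_def)
          show "- x \<in> \<Union>C" using XY XYs by (auto intro!: sr_minus)
          from ch[OF XY(1,2)] show "x + y \<in> \<Union>C"
            using XY XYs sr_add by blast
          from ch[OF XY(1,2)] show "x * y \<in> \<Union>C"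
            using XY XYs sr_mult by blast
        qed
      qed
      then show ?thesis by auto
    qed
  qed
  then obtain B where B: "B \<in> F" "\<And>X. X \<in> F \<Longrightarrow> B \<subseteq> X \<Longrightarrow> X = B" by blast
  have Bs: "subring B" and RB: "RR \<subseteq> B" and wB: "w \<in> B" and zB: "z \<notin> B" using B(1) by (auto simp: F_def)
  have maxB: "y \<in> B" if "z \<notin> adjoin B y" for y
  proof -
    have "adjoin B y \<in> F" using adjoin_subring[OF Bs, of y] that RB wB by (auto simp: F_def)
    then have "adjoin B y = B" using B(2) adjoin_subring(2)[OF Bs] by blast
    then show ?thesis using adjoin_subring(3)[OF Bs, of y] by simp
  qed
  have "valuation_ring B"
    by (rule maximal_is_vr[OF z0 Bs _ zB maxB]) (use wB w_def in simp)
  then show ?thesis using RB zB by blast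
qed


definition Mins :: "'a::idom fract set set" where
  "Mins = {V. valuation_ring V \<and> RR \<subseteq> V \<and> (\<forall>X. valuation_ring X \<and> RR \<subseteq> X \<and> X \<subseteq> V \<longrightarrow> X = V)}"

lemma vr_chain_inter:
  fixes C :: "'k::field set set"
  assumes ne: "C \<noteq> {}" and vr: "\<And>V. V \<in> C \<Longrightarrow> valuation_ring V"
    and ch: "\<And>X Y. X \<in> C \<Longrightarrow> Y \<in> C \<Longrightarrow> X \<subseteq> Y \<or> Y \<subseteq> X"
  shows "valuation_ring (\<Inter>C)"
  unfolding vr_iff
proof (intro conjI allI impI)
  show "subring (\<Inter>C)" unfolding subring_def
  proof (intro conjI ballI)
    show "0 \<in> \<Inter>C"
    proof (rule InterI)
      fix V assume "V \<in> C" then show "0 \<in> V" by (rule sr0[OF VS[OF vr]])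
    qed
    show "1 \<in> \<Inter>C"
    proof (rule InterI)
      fix V assume "V \<in> C" then show "1 \<in> V" by (rule sr1[OF VS[OF vr]])
    qed
    fix x y assume x: "x \<in> \<Inter>C" and y: "y \<in> \<Inter>C"
    show "x + y \<in> \<Inter>C"
    proof (rule InterI)
      fix V assume V: "V \<in> C"
      show "x + y \<in> V" using x y V by (intro sr_add[OF VS[OF vr[OF V]]]) auto
    qed
    show "- x \<in> \<Inter>C"
    proof (rule InterI)
      fix V assume V: "V \<in> C"
      show "- x \<in> V" using x V by (intro sr_minus[OF VS[OF vr[OF V]]]) auto
    qed
    show "x * y \<in> \<Inter>C"
    proof (rule InterI)
      fix V assume V: "V \<in> C"
      show "x * y \<in> V" using x y V by (intro sr_mult[OF VS[OF vr[OF V]]]) auto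
    qed
  qed
  fix x :: "'k" assume x0: "x \<noteq> 0"
  show "x \<in> \<Inter>C \<or> inverse x \<in> \<Inter>C"
  proof (cases "x \<in> \<Inter>C")
    case True then show ?thesis by simp
  next
    case False
    then obtain V0 where V0: "V0 \<in> C" "x \<notin> V0" by auto
    have "inverse x \<in> V" if V: "V \<in> C" for V
    proof (cases "V \<subseteq> V0")
      case True
      then have "x \<notin> V" using V0 by auto
      then show ?thesis using vr_cases[OF vr[OF V] x0] by simp
    next
      case False
      then have "V0 \<subseteq> V" using ch[OF V V0(1)] by auto
      moreover have "inverse x \<in> V0" using vr_cases[OF vr[OF V0(1)] x0] V0(2) by simp
      ultimately show ?thesis by auto
    qed
    then show ?thesis by auto
  qed
qed

lemma exists_min:
  assumes V0: "valuation_ring V0" "(RR :: 'a::idom fract set) \<subseteq> V0"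
  shows "\<exists>V\<in>Mins. V \<subseteq> V0"
proof -
  define G where "G = {V. valuation_ring V \<and> (RR :: 'a fract set) \<subseteq> V \<and> V \<subseteq> V0}"
  have V0G: "V0 \<in> G" using V0 by (simp add: G_def)
  have "\<exists>M\<in>uminus ` G. \<forall>X\<in>uminus ` G. M \<subseteq> X \<longrightarrow> X = M"
  proof (rule Zorn_Lemma2, intro ballI)
    fix C' assume C': "C' \<in> chains (uminus ` G)"
    have C'G: "C' \<subseteq> uminus ` G" using C' by (rule chainsD2)
    have ch': "\<And>X Y. X \<in> C' \<Longrightarrow> Y \<in> C' \<Longrightarrow> X \<subseteq> Y \<or> Y \<subseteq> X"
      using C' by (rule chainsD)
    show "\<exists>U\<in>uminus ` G. \<forall>X\<in>C'. X \<subseteq> U"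
    proof (cases "C' = {}")
      case True then show ?thesis using V0G by blast
    next
      case False
      define C where "C = uminus ` C'"
      have CG: "C \<subseteq> G" using C'G by (auto simp: C_def)
      have Cne: "C \<noteq> {}" using False by (simp add: C_def)
      have vrC: "valuation_ring (\<Inter>C)"
      proof (rule vr_chain_inter[OF Cne])
        show "\<And>V. V \<in> C \<Longrightarrow> valuation_ring V" using CG by (auto simp: G_def)
        fix X Y assume "X \<in> C" "Y \<in> C"
        then obtain X' Y' where "X' \<in> C'" "Y' \<in> C'" "X = - X'" "Y = - Y'" by (auto simp: C_def)
        then show "X \<subseteq> Y \<or> Y \<subseteq> X" using ch'[of X' Y'] by auto
      qed
      have RC: "RR \<subseteq> \<Inter>C"
      proof
        fix r :: "'a fract" assume "r \<in> RR"
        then show "r \<in> \<Inter>C" using CG by (auto simp: G_def)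
      qed
      obtain X0 where X0: "X0 \<in> C" using Cne by blast
      have "\<Inter>C \<subseteq> X0" using X0 by blast
      also have "X0 \<subseteq> V0" using X0 CG by (auto simp: G_def)
      finally have "\<Inter>C \<subseteq> V0" .
      then have "\<Inter>C \<in> G" using vrC RC by (simp add: G_def)
      then have img: "- \<Inter>C \<in> uminus ` G" by (rule imageI)
      have "X \<subseteq> - \<Inter>C" if X: "X \<in> C'" for X
      proof -
        have "- X \<in> C" using X by (simp add: C_def)
        then have "\<Inter>C \<subseteq> - X" by blast
        then show ?thesis by (rule compl_le_swap1)
      qed
      then show ?thesis using img by blast
    qed
  qed
  then obtain M' where M'1: "M' \<in> uminus ` G" and M'2: "\<forall>X\<in>uminus ` G. M' \<subseteq> X \<longrightarrow> X = M'" by (rule bexE)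
  have M'3: "X = M'" if "X \<in> uminus ` G" "M' \<subseteq> X" for X
    using bspec[OF M'2 that(1)] that(2) by (rule mp)
  note M' = M'1 M'3
  then obtain M where MG: "M \<in> G" "M' = - M" by blast
  have M: "M \<in> G" "\<And>X. X \<in> G \<Longrightarrow> - M \<subseteq> - X \<Longrightarrow> - X = - M"
  proof -
    show "M \<in> G" by (rule MG(1))
    fix X assume X: "X \<in> G" "- M \<subseteq> - X"
    have "- X \<in> uminus ` G" using X(1) by (rule imageI)
    moreover have "M' \<subseteq> - X" using X(2) MG(2) by simp
    ultimately have "- X = M'" by (rule M'(2))
    then show "- X = - M" using MG(2) by simp
  qed
  have "M \<in> Mins" unfolding Mins_def
  proof (intro CollectI conjI allI impI)
    show "valuation_ring M" "RR \<subseteq> M" using M(1) by (auto simp: G_def)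
    fix X assume X: "valuation_ring X \<and> RR \<subseteq> X \<and> X \<subseteq> M"
    then have "X \<in> G" using M(1) by (auto simp: G_def)
    moreover have "- M \<subseteq> - X" using X by (simp add: Compl_subset_Compl_iff)
    ultimately have "- X = - M" by (rule M(2))
    then show "X = M" by simp
  qed
  moreover have "M \<subseteq> V0" using M(1) by (simp add: G_def)
  ultimately show ?thesis by blast
qed

lemma Mins_vr: "V \<in> Mins \<Longrightarrow> valuation_ring V"
  by (simp add: Mins_def)
lemma Mins_RR: "V \<in> Mins \<Longrightarrow> RR \<subseteq> V"
  by (simp add: Mins_def)

lemma Mins_incomp: "V \<in> Mins \<Longrightarrow> W \<in> Mins \<Longrightarrow> V \<noteq> W \<Longrightarrow> \<not> V \<subseteq> W"
proof
  assume V: "V \<in> Mins" and W: "W \<in> Mins" and ne: "V \<noteq> W" and sub: "V \<subseteq> W"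
  have "\<forall>X. valuation_ring X \<and> RR \<subseteq> X \<and> X \<subseteq> W \<longrightarrow> X = W" using W by (simp add: Mins_def)
  moreover have "valuation_ring V \<and> RR \<subseteq> V \<and> V \<subseteq> W" using V sub by (simp add: Mins_def)
  ultimately have "V = W" by blast
  then show False using ne by simp
qed

lemma S_eq_Mins: "integral_closure TYPE('a::idom) = \<Inter>(Mins :: 'a fract set set)"
proof (rule Set.set_eqI, rule iffI)
  fix z assume z: "z \<in> integral_closure TYPE('a)"
  show "z \<in> \<Inter>(Mins :: 'a fract set set)"
  proof
    fix V :: "'a fract set" assume V: "V \<in> Mins"
    show "z \<in> V" by (rule ic_in_vr[OF Mins_vr[OF V] Mins_RR[OF V] z])
  qed
next
  fix z assume z: "z \<in> \<Inter>(Mins :: 'a fract set set)"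
  show "z \<in> integral_closure TYPE('a)"
  proof (rule ccontr)
    assume "z \<notin> integral_closure TYPE('a)"
    then obtain V where V: "valuation_ring V" "(RR :: 'a fract set) \<subseteq> V" "z \<notin> V" using krull by blast
    then obtain V' where "V' \<in> Mins" "V' \<subseteq> V" using exists_min by blast
    then show False using z V(3) by auto
  qed
qed

lemma card_bound:
  assumes br: "breadth_le TYPE('a::idom) n" and n1: "n \<ge> 1"
    and F: "F \<subseteq> (Mins :: 'a fract set set)" "finite F"
  shows "card F \<le> n"
proof (rule ccontr)
  assume "\<not> card F \<le> n"
  then obtain F' where F': "F' \<subseteq> F" "card F' = Suc n" using obtain_subset_with_card_n[of "Suc n" F] by auto
  have fF': "finite F'" using F' F(2) finite_subset by blast
  obtain f where f: "bij_betw f {..n} F'"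
    using finite_same_card_bij[of "{..n}" F'] fF' F' by auto
  have fM: "f i \<in> Mins" if "i \<le> n" for i using f that F'(1) F(1) by (auto simp: bij_betw_def)
  have finj: "f i \<noteq> f j" if "i \<le> n" "j \<le> n" "i \<noteq> j" for i j
    using f that by (auto simp: bij_betw_def inj_on_def)
  have H: "\<exists>c. c \<in> mV (f i) \<and> (\<forall>j\<le>n. j \<noteq> i \<longrightarrow> c \<notin> f j)" if i: "i \<le> n" for i
  proof -
    have "\<exists>c. c \<in> mV (f i) \<and> (\<forall>W\<in>f ` ({..n} - {i}). c \<notin> W)"
    proof (rule approx[OF Mins_vr[OF fM[OF i]]])
      show "finite (f ` ({..n} - {i}))" by simp
      show "\<forall>W\<in>f ` ({..n} - {i}). valuation_ring W \<and> \<not> f i \<subseteq> W \<and> \<not> W \<subseteq> f i"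
      proof
        fix W assume "W \<in> f ` ({..n} - {i})"
        then obtain j where j: "j \<le> n" "j \<noteq> i" "W = f j" by auto
        have ne: "f i \<noteq> f j" using finj[OF i j(1)] j(2) by blast
        show "valuation_ring W \<and> \<not> f i \<subseteq> W \<and> \<not> W \<subseteq> f i"
          using Mins_vr[OF fM[OF j(1)]] Mins_incomp[OF fM[OF i] fM[OF j(1)] ne]
            Mins_incomp[OF fM[OF j(1)] fM[OF i] ne[symmetric]] j(3) by simp
      qed
    qed
    then show ?thesis by auto
  qed
  have "\<forall>i. \<exists>c. i \<le> n \<longrightarrow> c \<in> mV (f i) \<and> (\<forall>j\<le>n. j \<noteq> i \<longrightarrow> c \<notin> f j)"
    using H by blast
  then have "\<exists>cf. \<forall>i. i \<le> n \<longrightarrow> cf i \<in> mV (f i) \<and> (\<forall>j\<le>n. j \<noteq> i \<longrightarrow> cf i \<notin> f j)"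
    by (rule choice)
  then obtain cf where cf: "\<And>i. i \<le> n \<Longrightarrow> cf i \<in> mV (f i)"
    "\<And>i j. i \<le> n \<Longrightarrow> j \<le> n \<Longrightarrow> j \<noteq> i \<Longrightarrow> cf i \<notin> f j" by blast
  define y where "y = (\<lambda>i. inverse (cf i))"
  obtain i where i: "i \<le> n" "spanR {..n} y = spanR ({..n}-{i}) y" using Kbreadth[OF br] by blast
  have "y i \<in> spanR {..n} y" using span_basis[of "{..n}" i y] i(1) by simp
  then have "y i \<in> spanR ({..n}-{i}) y" using i(2) by simp
  then obtain r where r: "\<forall>j. r j \<in> RR" "y i = (\<Sum>j\<in>{..n}-{i}. r j * y j)"
    unfolding spanR_def by blast
  have Vi: "valuation_ring (f i)" using Mins_vr[OF fM[OF i(1)]] .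
  have "y i \<in> mV (f i)" unfolding r(2)
  proof (rule m_sum[OF Vi])
    fix j assume j: "j \<in> {..n} - {i}"
    then have "cf j \<notin> f i" using cf(2)[of j i] i(1) by auto
    then have "y j \<in> mV (f i)" using notin_inv_m[OF Vi] by (simp add: y_def)
    moreover have "r j \<in> f i" using r(1) Mins_RR[OF fM[OF i(1)]] by blast
    ultimately show "r j * y j \<in> mV (f i)" by (rule m_mult'[OF Vi])
  qed
  moreover have "cf i \<noteq> 0"
  proof -
    define j :: nat where "j = (if i = 0 then 1 else 0)"
    have "j \<le> n" "j \<noteq> i" using n1 i(1) by (auto simp: j_def)
    then have "cf i \<notin> f j" using cf(2) i(1) by blast
    then show ?thesis using sr0[OF VS[OF Mins_vr[OF fM[OF \<open>j \<le> n\<close>]]]] by auto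
  qed
  ultimately show False using in_m_inv_notin[OF Vi cf(1)[OF i(1)]] m_sub[OF Vi] by (auto simp: y_def)
qed

lemma Mins_finite:
  assumes br: "breadth_le TYPE('a::idom) n" and n1: "n \<ge> 1"
  shows "finite (Mins :: 'a fract set set)"
proof (rule ccontr)
  assume "infinite (Mins :: 'a fract set set)"
  then obtain F where F: "finite F" "card F = Suc n" "F \<subseteq> (Mins :: 'a fract set set)"
    using infinite_arbitrarily_large by blast
  have "card F \<le> n" by (rule card_bound[OF br n1 F(3) F(1)])
  then show False using F(2) by simp
qed


context
  fixes V :: "'k::field set"
  assumes VR: "valuation_ring V"
begin

lemma unit_mult: "unitV V a \<Longrightarrow> unitV V b \<Longrightarrow> unitV V (a * b)"
  using sr_mult[OF VS[OF VR]] by (auto simp: unitV_def)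

lemma unit_inv: "unitV V a \<Longrightarrow> unitV V (inverse a)"
  by (auto simp: unitV_def)

lemma unit_plus_m: "unitV V u \<Longrightarrow> t \<in> mV V \<Longrightarrow> unitV V (u + t)"
proof -
  assume u: "unitV V u" and t: "t \<in> mV V"
  have "t * inverse u \<in> mV V" using m_mult[OF VR t] u by (simp add: unitV_def)
  then have "unitV V (1 + t * inverse u)" by (rule one_plus_m_unit[OF VR])
  moreover have "u + t = u * (1 + t * inverse u)" using u by (simp add: unitV_def field_simps)
  ultimately show ?thesis using unit_mult[OF u] by simp
qed

lemma unit_notin_m: "unitV V u \<Longrightarrow> u \<notin> mV V"
  by (simp add: mV_def)

end

lemma vchar:
  fixes Ms :: "'k::field set set"
  assumes Mfin: "finite Ms" and Mvr: "\<And>W. W \<in> Ms \<Longrightarrow> valuation_ring W"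
    and V: "V \<in> Ms" and x: "x \<notin> V" "\<And>W. W \<in> Ms \<Longrightarrow> W \<noteq> V \<Longrightarrow> x \<in> mV W"
  defines "p \<equiv> inverse (1 + x)" and "q \<equiv> x * inverse (1 + x)"
  shows "z \<in> V \<longleftrightarrow> (\<exists>s. s \<in> \<Inter>Ms \<and> s * z \<in> \<Inter>Ms \<and> s * q + p \<noteq> 0 \<and> inverse (s * q + p) \<in> \<Inter>Ms)"
proof
  have VV: "valuation_ring V" using Mvr[OF V] .
  have x1V: "1 + x \<notin> V"
  proof
    assume "1 + x \<in> V"
    then have "(1 + x) - 1 \<in> V" using sr_diff[OF VS[OF VV]] sr1[OF VS[OF VV]] by blast
    then show False using x(1) by simp
  qed
  have x10: "1 + x \<noteq> 0" using x1V sr0[OF VS[OF VV]] by auto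
  have pV: "p \<in> mV V" using notin_inv_m[OF VV x1V] by (simp add: p_def)
  have qp: "q = 1 - p" using x10 by (simp add: p_def q_def field_simps)
  have qV: "unitV V q" using one_plus_m_unit[OF VV m_minus[OF VV pV]] by (simp add: qp)
  {
    assume "\<exists>s. s \<in> \<Inter>Ms \<and> s * z \<in> \<Inter>Ms \<and> s * q + p \<noteq> 0 \<and> inverse (s * q + p) \<in> \<Inter>Ms"
    then obtain s where s: "s \<in> \<Inter>Ms" "s * z \<in> \<Inter>Ms" "s * q + p \<noteq> 0" "inverse (s * q + p) \<in> \<Inter>Ms"
      by blast
    have sV: "s \<in> V" "s * z \<in> V" "inverse (s * q + p) \<in> V" using s V by auto
    have "s \<notin> mV V"
    proof
      assume sm: "s \<in> mV V"
      have "s * q \<in> mV V" using m_mult[OF VV sm] qV by (simp add: unitV_def)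
      then have "s * q + p \<in> mV V" using m_add[OF VV _ pV] by blast
      then show False using in_m_inv_notin[OF VV _ s(3)] sV(3) by blast
    qed
    then have su: "unitV V s" using unit_of_notin_m[OF VV sV(1)] by blast
    have "z = (s * z) * inverse s" using su by (simp add: unitV_def field_simps)
    moreover have "(s * z) * inverse s \<in> V" using sV(2) su sr_mult[OF VS[OF VV]] by (simp add: unitV_def)
    ultimately show "z \<in> V" by metis
  }
  assume zV: "z \<in> V"
  define F where "F = Ms - {V}"
  have Ffin: "finite F" using Mfin by (simp add: F_def)
  have x0: "x \<noteq> 0" using x(1) sr0[OF VS[OF VV]] by auto
  have "\<exists>m \<in> {1..card F + 1}. \<forall>W\<in>F. \<not> unitV W (z * inverse x ^ m)"
  proof (rule pigeon[OF Ffin])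
    fix W m m' assume W: "W \<in> F" and u1: "unitV W (z * inverse x ^ m)" and u2: "unitV W (z * inverse x ^ m')"
    have WV: "valuation_ring W" using W Mvr by (auto simp: F_def)
    have xW: "x \<in> mV W" using W x(2) by (auto simp: F_def)
    have z0: "z \<noteq> 0" using u1 by (auto simp: unitV_def)
    have gen: False if l: "k < k'" and v1: "unitV W (z * inverse x ^ k)" and v2: "unitV W (z * inverse x ^ k')" for k k'
    proof -
      have "unitV W ((z * inverse x ^ k) * inverse (z * inverse x ^ k'))"
        by (rule unit_mult[OF WV v1 unit_inv[OF WV v2]])
      moreover have "(z * inverse x ^ k) * inverse (z * inverse x ^ k') = x ^ (k' - k)"
        using l z0 x0 by (simp add: power_diff field_simps power_inverse)
      ultimately have "unitV W (x ^ (k' - k))" by simp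
      moreover have "x ^ (k' - k) \<in> mV W" using m_power[OF WV xW] l by simp
      ultimately show False using unit_notin_m[OF WV] by blast
    qed
    show "m = m'" using gen[OF _ u1 u2] gen[OF _ u2 u1] by (cases m m' rule: linorder_cases) auto
  qed
  then obtain m where m: "m \<ge> 1" "\<And>W. W \<in> F \<Longrightarrow> \<not> unitV W (z * inverse x ^ m)" by auto
  define w where "w = z * inverse x ^ m"
  define s where "s = inverse (1 + w)"
  have ixV: "inverse x \<in> mV V" using notin_inv_m[OF VV x(1)] .
  have wV: "w \<in> mV V" unfolding w_def using m_mult'[OF VV m_power[OF VV ixV m(1)] zV] by (simp add: power_inverse)
  have w1: "unitV V (1 + w)" using one_plus_m_unit[OF VV wV] .
  have sVu: "unitV V s" unfolding s_def by (rule unit_inv[OF VV w1])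
  have w10: "1 + w \<noteq> 0" using w1 by (simp add: unitV_def)
  have zw: "z = w * x ^ m" using x0 by (simp add: w_def field_simps power_inverse)
  have sS: "s \<in> W \<and> s * z \<in> W" if W: "W \<in> Ms" for W
  proof (cases "W = V")
    case True
    then show ?thesis using sVu zV sr_mult[OF VS[OF VV]] by (auto simp: unitV_def)
  next
    case False
    have WV: "valuation_ring W" using Mvr[OF W] .
    have xW: "x \<in> mV W" using x(2)[OF W False] .
    have xmW: "x ^ m \<in> W" using m_sub[OF WV] xW sr_power[OF VS[OF WV]] by blast
    have nu: "\<not> unitV W w" using m(2)[of W] W False by (simp add: F_def w_def)
    show ?thesis
    proof (cases "w \<in> W")
      case True
      then have "w \<in> mV W" using nu by (simp add: mV_def)
      then have "unitV W (1 + w)" by (rule one_plus_m_unit[OF WV])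
      then have "s \<in> W" by (simp add: s_def unitV_def)
      moreover have "z \<in> W" using zw True xmW sr_mult[OF VS[OF WV]] by simp
      ultimately show ?thesis using sr_mult[OF VS[OF WV]] by blast
    next
      case False
      have w0: "w \<noteq> 0" using False sr0[OF VS[OF WV]] by auto
      have iw: "inverse w \<in> mV W" using notin_inv_m[OF WV False] .
      have u: "unitV W (1 + inverse w)" using one_plus_m_unit[OF WV iw] .
      have s_eq: "s = inverse w * inverse (1 + inverse w)" using w0 w10 by (simp add: s_def field_simps)
      have sz_eq: "s * z = x ^ m * inverse (1 + inverse w)" using w0 w10 x0 by (simp add: s_def zw field_simps)
      have "s \<in> W" unfolding s_eq using m_sub[OF WV] iw u sr_mult[OF VS[OF WV]] by (auto simp: unitV_def)
      moreover have "s * z \<in> W" unfolding sz_eq using xmW u sr_mult[OF VS[OF WV]] by (auto simp: unitV_def)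
      ultimately show ?thesis by blast
    qed
  qed
  have gS: "unitV W (s * q + p)" if W: "W \<in> Ms" for W
  proof (cases "W = V")
    case True
    have "unitV V (s * q)" by (rule unit_mult[OF VV sVu qV])
    then show ?thesis using unit_plus_m[OF VV _ pV] True by blast
  next
    case False
    have WV: "valuation_ring W" using Mvr[OF W] .
    have xW: "x \<in> mV W" using x(2)[OF W False] .
    have pu: "unitV W p" unfolding p_def by (rule unit_inv[OF WV one_plus_m_unit[OF WV xW]])
    have "q \<in> mV W" using m_mult[OF WV xW] pu by (simp add: q_def p_def unitV_def)
    then have "s * q \<in> mV W" using m_mult'[OF WV] sS[OF W] by blast
    then have "unitV W (p + s * q)" by (rule unit_plus_m[OF WV pu])
    then show ?thesis by (simp add: add.commute)
  qed
  show "\<exists>s. s \<in> \<Inter>Ms \<and> s * z \<in> \<Inter>Ms \<and> s * q + p \<noteq> 0 \<and> inverse (s * q + p) \<in> \<Inter>Ms"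
  proof (intro exI conjI)
    show "s \<in> \<Inter>Ms" "s * z \<in> \<Inter>Ms" using sS by auto
    show "s * q + p \<noteq> 0" using gS[OF V] by (simp add: unitV_def)
    show "inverse (s * q + p) \<in> \<Inter>Ms" using gS by (auto simp: unitV_def)
  qed
qed


primrec tfv :: "'a rterm \<Rightarrow> nat set" where
  "tfv (RVar k) = {k}"
| "tfv (RConst c) = {}"
| "tfv RZero = {}"
| "tfv ROne = {}"
| "tfv (RAdd s t) = tfv s \<union> tfv t"
| "tfv (RMinus s) = tfv s"
| "tfv (RMul s t) = tfv s \<union> tfv t"

lemma teval_cong: "(\<And>k. k \<in> tfv t \<Longrightarrow> e k = e' k) \<Longrightarrow> teval e t = teval e' t"
  by (induct t) auto

primrec tpow :: "'a rterm \<Rightarrow> nat \<Rightarrow> 'a rterm" where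
  "tpow t 0 = ROne"
| "tpow t (Suc k) = RMul (tpow t k) t"

lemma teval_tpow[simp]: "teval e (tpow t k) = teval e t ^ k"
  by (induct k) auto

lemma tfv_tpow: "tfv (tpow t k) \<subseteq> tfv t"
  by (induct k) auto

primrec tsum :: "nat \<Rightarrow> (nat \<Rightarrow> 'a rterm) \<Rightarrow> 'a rterm" where
  "tsum 0 f = RZero"
| "tsum (Suc k) f = RAdd (tsum k f) (f k)"

lemma teval_tsum[simp]: "teval e (tsum k f) = (\<Sum>j<k. teval e (f j))"
  by (induct k) auto

primrec exs :: "nat \<Rightarrow> nat \<Rightarrow> 'a rformula \<Rightarrow> 'a rformula" where
  "exs b 0 \<phi> = \<phi>"
| "exs b (Suc k) \<phi> = FEx b (exs (Suc b) k \<phi>)"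

definition upd :: "(nat \<Rightarrow> 'a) \<Rightarrow> nat \<Rightarrow> nat \<Rightarrow> (nat \<Rightarrow> 'a) \<Rightarrow> nat \<Rightarrow> 'a" where
  "upd e b k c = (\<lambda>j. if b \<le> j \<and> j < b + k then c (j - b) else e j)"

lemma sat_exs: "sat e (exs b k \<phi>) \<longleftrightarrow> (\<exists>c. sat (upd e b k c) \<phi>)"
proof (induct k arbitrary: b e)
  case 0
  have "upd e b 0 c = e" for c by (rule ext) (auto simp: upd_def)
  then show ?case by simp
next
  case (Suc k)
  have eq1: "upd (e(b := a)) (Suc b) k c = upd e b (Suc k) (\<lambda>i. if i = 0 then a else c (i - 1))" for a c
    by (rule ext) (auto simp: upd_def)
  have eq2: "upd e b (Suc k) c' = upd (e(b := c' 0)) (Suc b) k (\<lambda>i. c' (Suc i))" for c'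
    by (rule ext) (auto simp: upd_def Suc_diff_Suc)
  show ?case
  proof
    assume "sat e (exs b (Suc k) \<phi>)"
    then obtain a where "sat (e(b := a)) (exs (Suc b) k \<phi>)" by auto
    then obtain c where "sat (upd (e(b := a)) (Suc b) k c) \<phi>" using Suc.hyps by blast
    then show "\<exists>c. sat (upd e b (Suc k) c) \<phi>" unfolding eq1 by blast
  next
    assume "\<exists>c. sat (upd e b (Suc k) c) \<phi>"
    then obtain c' where "sat (upd e b (Suc k) c') \<phi>" by blast
    then have "sat (upd (e(b := c' 0)) (Suc b) k (\<lambda>i. c' (Suc i))) \<phi>" unfolding eq2 .
    then have "sat (e(b := c' 0)) (exs (Suc b) k \<phi>)" using Suc.hyps by blast
    then show "sat e (exs b (Suc k) \<phi>)" by auto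
  qed
qed

definition SF :: "nat \<Rightarrow> nat \<Rightarrow> 'a rterm \<Rightarrow> 'a rterm \<Rightarrow> 'a rformula" where
  "SF n b tN tD = FConj (FNot (FEq tD RZero))
     (exs b n (FEq (tpow tN n) (tsum n (\<lambda>j. RMul (RVar (b + j)) (RMul (tpow tN j) (tpow tD (n - j)))))))"

lemma frac_poly_eq:
  fixes x d :: "'k::field"
  assumes d0: "d \<noteq> 0"
  shows "(x / d) ^ n = (\<Sum>j<n. c j * (x / d) ^ j) \<longleftrightarrow> x ^ n = (\<Sum>j<n. c j * (x ^ j * d ^ (n - j)))"
proof -
  have "(x / d) ^ n * d ^ n = x ^ n" using d0 by (simp add: power_divide)
  moreover have "(\<Sum>j<n. c j * (x / d) ^ j) * d ^ n = (\<Sum>j<n. c j * (x ^ j * d ^ (n - j)))"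
    unfolding sum_distrib_right
  proof (rule sum.cong[OF refl])
    fix j assume "j \<in> {..<n}"
    then have "d ^ n = d ^ j * d ^ (n - j)" by (simp add: power_add[symmetric])
    then show "c j * (x / d) ^ j * d ^ n = c j * (x ^ j * d ^ (n - j))"
      using d0 by (simp add: power_divide field_simps)
  qed
  moreover have "d ^ n \<noteq> 0" using d0 by simp
  ultimately show ?thesis by (metis mult_cancel_right)
qed

lemma sat_SF:
  fixes e :: "nat \<Rightarrow> 'a::idom"
  assumes br: "breadth_le TYPE('a) n" and n1: "n \<ge> 1"
    and fv: "\<And>k. k \<in> tfv tN \<union> tfv tD \<Longrightarrow> k < b"
  shows "sat e (SF n b tN tD) \<longleftrightarrow> teval e tD \<noteq> 0 \<and>
     frac_embed (teval e tN) / frac_embed (teval e tD) \<in> integral_closure TYPE('a)"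
proof -
  define N where "N = teval e tN"
  define D where "D = teval e tD"
  have fvN: "k < b" if "k \<in> tfv tN" for k using fv that by blast
  have fvD: "k < b" if "k \<in> tfv tD" for k using fv that by blast
  have evN: "teval (upd e b n c) tN = N" for c
    unfolding N_def by (rule teval_cong) (use fvN in \<open>fastforce simp: upd_def\<close>)
  have evD: "teval (upd e b n c) tD = D" for c
    unfolding D_def by (rule teval_cong) (use fvD in \<open>fastforce simp: upd_def\<close>)
  have evc: "upd e b n c (b + j) = c j" if "j < n" for c j using that by (simp add: upd_def)
  have "sat e (SF n b tN tD) \<longleftrightarrow> D \<noteq> 0 \<and> (\<exists>c. N ^ n = (\<Sum>j<n. c j * (N ^ j * D ^ (n - j))))"
  proof -
    have sumeq: "(\<Sum>j<n. upd e b n c (b + j) * (N ^ j * D ^ (n - j))) = (\<Sum>j<n. c j * (N ^ j * D ^ (n - j)))" for c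
      by (rule sum.cong) (auto simp: evc)
    show ?thesis
      unfolding SF_def sat.simps sat_exs teval.simps teval_tpow teval_tsum evN evD D_def[symmetric] sumeq
      by simp
  qed
  also have "\<dots> \<longleftrightarrow> D \<noteq> 0 \<and> Tn n (frac_embed N / frac_embed D)"
  proof (cases "D = 0")
    case True then show ?thesis by simp
  next
    case False
    then have d0: "frac_embed D \<noteq> 0" by simp
    have "(\<exists>c. N ^ n = (\<Sum>j<n. c j * (N ^ j * D ^ (n - j)))) \<longleftrightarrow> Tn n (frac_embed N / frac_embed D)"
    proof
      assume "\<exists>c. N ^ n = (\<Sum>j<n. c j * (N ^ j * D ^ (n - j)))"
      then obtain c where c: "N ^ n = (\<Sum>j<n. c j * (N ^ j * D ^ (n - j)))" by blast
      have "frac_embed N ^ n = (\<Sum>j<n. frac_embed (c j) * (frac_embed N ^ j * frac_embed D ^ (n - j)))"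
        using arg_cong[OF c, of frac_embed] by (simp add: fe_sum)
      then have "(frac_embed N / frac_embed D) ^ n = (\<Sum>j<n. frac_embed (c j) * (frac_embed N / frac_embed D) ^ j)"
        unfolding frac_poly_eq[OF d0] .
      then show "Tn n (frac_embed N / frac_embed D)" unfolding Tn_def
        by (intro exI[of _ "\<lambda>j. frac_embed (c j)"]) simp
    next
      assume "Tn n (frac_embed N / frac_embed D)"
      then obtain r where r: "\<forall>j. r j \<in> RR" "(frac_embed N / frac_embed D) ^ n = (\<Sum>j<n. r j * (frac_embed N / frac_embed D) ^ j)"
        unfolding Tn_def by blast
      obtain c where c: "\<forall>j. r j = frac_embed (c j)" using RR_choice[OF r(1)] by blast
      have "frac_embed N ^ n = (\<Sum>j<n. frac_embed (c j) * (frac_embed N ^ j * frac_embed D ^ (n - j)))"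
        using r(2) frac_poly_eq[OF d0] c by simp
      then have "frac_embed (N ^ n) = frac_embed (\<Sum>j<n. c j * (N ^ j * D ^ (n - j)))" by (simp add: fe_sum)
      then show "\<exists>c. N ^ n = (\<Sum>j<n. c j * (N ^ j * D ^ (n - j)))" by (simp only: fe_inj) blast
    qed
    then show ?thesis using False by simp
  qed
  also have "\<dots> \<longleftrightarrow> D \<noteq> 0 \<and> frac_embed N / frac_embed D \<in> integral_closure TYPE('a)"
    using S_Tn[OF br] Tn_S[OF n1] by blast
  finally show ?thesis by (simp add: N_def D_def)
qed


lemma def_S:
  assumes br: "breadth_le TYPE('a::idom) n" and n1: "n \<ge> 1"
  shows "frac_definable (integral_closure TYPE('a))"
  unfolding frac_definable_def definable2_def
proof (intro exI allI)
  fix a b :: 'a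
  let ?e = "((\<lambda>_. 0)(0 := a, 1 := b)) :: nat \<Rightarrow> 'a"
  have "sat ?e (SF n 2 (RVar 0) (RVar 1)) \<longleftrightarrow> teval ?e (RVar 1) \<noteq> 0 \<and>
     frac_embed (teval ?e (RVar 0)) / frac_embed (teval ?e (RVar 1)) \<in> integral_closure TYPE('a)"
    by (rule sat_SF[OF br n1]) auto
  then show "(b \<noteq> 0 \<and> Fraction_Field.Fract a b \<in> integral_closure TYPE('a)) \<longleftrightarrow> sat ?e (SF n 2 (RVar 0) (RVar 1))"
    by (auto simp: Fract_div)
qed

lemma frac_id:
  fixes c d q1 q2 p1 p2 :: "'a::idom"
  assumes "d \<noteq> 0" "q2 \<noteq> 0" "p2 \<noteq> 0"
  shows "frac_embed c / frac_embed d * (frac_embed q1 / frac_embed q2) + frac_embed p1 / frac_embed p2 =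
    frac_embed (c * q1 * p2 + p1 * d * q2) / frac_embed (d * q2 * p2)"
  using assms by (simp add: field_simps)

lemma def_V:
  assumes br: "breadth_le TYPE('a::idom) n" and n1: "n \<ge> 1"
    and V: "V \<in> (Mins :: 'a fract set set)"
  shows "frac_definable V"
proof (cases "Mins - {V} = ({} :: 'a fract set set)")
  case True
  then have Meq: "(Mins :: 'a fract set set) = {V}" using V by blast
  have "\<Inter>(Mins :: 'a fract set set) = V" unfolding Meq by simp
  then have "V = integral_closure TYPE('a)" using S_eq_Mins[where 'a='a] by simp
  then show ?thesis using def_S[OF br n1] by simp
next
  case False
  define S where "S = integral_closure TYPE('a)"
  have Mfin: "finite (Mins :: 'a fract set set)" by (rule Mins_finite[OF br n1])
  have VV: "valuation_ring V" using Mins_vr[OF V] .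
  obtain c where c: "c \<in> mV V" "\<forall>W\<in>Mins - {V}. c \<notin> W"
  proof -
    have "\<exists>c. c \<in> mV V \<and> (\<forall>W\<in>Mins - {V}. c \<notin> W)"
    proof (rule approx[OF VV])
      show "finite (Mins - {V})" using Mfin by simp
      show "\<forall>W\<in>Mins - {V}. valuation_ring W \<and> \<not> V \<subseteq> W \<and> \<not> W \<subseteq> V"
      proof
        fix W assume W: "W \<in> Mins - {V}"
        then have ne: "V \<noteq> W" "W \<in> Mins" by auto
        show "valuation_ring W \<and> \<not> V \<subseteq> W \<and> \<not> W \<subseteq> V"
          using Mins_vr[OF ne(2)] Mins_incomp[OF V ne(2) ne(1)] Mins_incomp[OF ne(2) V ne(1)[symmetric]] by blast
      qed
    qed
    then show ?thesis using that by blast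
  qed
  obtain W0 where W0: "W0 \<in> Mins - {V}" using False by blast
  have c0: "c \<noteq> 0"
  proof
    assume "c = 0"
    moreover have "0 \<in> W0" using W0 Mins_vr sr0[OF VS] by blast
    ultimately show False using c(2) W0 by blast
  qed
  define x where "x = inverse c"
  have xV: "x \<notin> V" unfolding x_def by (rule in_m_inv_notin[OF VV c(1) c0])
  have xW: "x \<in> mV W" if "W \<in> Mins" "W \<noteq> V" for W
    unfolding x_def using notin_inv_m[OF Mins_vr[OF that(1)]] c(2) that by blast
  define p where "p = inverse (1 + x)"
  define q where "q = x * inverse (1 + x)"
  have vc: "z \<in> V \<longleftrightarrow> (\<exists>s. s \<in> S \<and> s * z \<in> S \<and> s * q + p \<noteq> 0 \<and> inverse (s * q + p) \<in> S)" for z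
    using vchar[OF Mfin Mins_vr V xV xW, of z] unfolding S_def S_eq_Mins p_def q_def by blast
  obtain p1 p2 where p12: "p2 \<noteq> 0" "p = frac_embed p1 / frac_embed p2" using fract_exists by blast
  obtain q1 q2 where q12: "q2 \<noteq> 0" "q = frac_embed q1 / frac_embed q2" using fract_exists by blast
  define tN3 :: "'a rterm" where "tN3 = RMul (RMul (RVar 3) (RConst q2)) (RConst p2)"
  define tD3 :: "'a rterm" where "tD3 = RAdd (RMul (RMul (RVar 2) (RConst q1)) (RConst p2)) (RMul (RMul (RConst p1) (RVar 3)) (RConst q2))"
  define \<phi> where "\<phi> = FConj (FNot (FEq (RVar 1) RZero)) (FEx 2 (FEx 3 (FConj (SF n 4 (RVar 2) (RVar 3))
     (FConj (SF n 4 (RMul (RVar 2) (RVar 0)) (RMul (RVar 3) (RVar 1))) (SF n 4 tN3 tD3)))))"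
  show ?thesis unfolding frac_definable_def definable2_def
  proof (intro exI[of _ \<phi>] allI)
    fix a b :: 'a
    let ?e = "((\<lambda>_. 0)(0 := a, 1 := b)) :: nat \<Rightarrow> 'a"
    have satSF: "sat e (SF n 4 tN tD) \<longleftrightarrow> teval e tD \<noteq> 0 \<and> frac_embed (teval e tN) / frac_embed (teval e tD) \<in> S"
      if "\<And>k. k \<in> tfv tN \<union> tfv tD \<Longrightarrow> k < 4" for e tN tD
      unfolding S_def by (rule sat_SF[OF br n1 that])
    have "sat ?e \<phi> \<longleftrightarrow> b \<noteq> 0 \<and> (\<exists>cc dd. (dd \<noteq> 0 \<and> frac_embed cc / frac_embed dd \<in> S) \<and>
        (dd * b \<noteq> 0 \<and> frac_embed (cc * a) / frac_embed (dd * b) \<in> S) \<and>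
        (cc * q1 * p2 + p1 * dd * q2 \<noteq> 0 \<and> frac_embed (dd * q2 * p2) / frac_embed (cc * q1 * p2 + p1 * dd * q2) \<in> S))"
      unfolding \<phi>_def sat.simps
      by (subst satSF, force simp: tN3_def tD3_def)+ (simp add: tN3_def tD3_def)
    also have "\<dots> \<longleftrightarrow> b \<noteq> 0 \<and> Fraction_Field.Fract a b \<in> V"
    proof (cases "b = 0")
      case True then show ?thesis by simp
    next
      case b0: False
      define z where "z = frac_embed a / frac_embed b"
      have Fz: "Fraction_Field.Fract a b = z" using b0 by (simp add: Fract_div z_def)
      have "(\<exists>cc dd. (dd \<noteq> 0 \<and> frac_embed cc / frac_embed dd \<in> S) \<and>
        (dd * b \<noteq> 0 \<and> frac_embed (cc * a) / frac_embed (dd * b) \<in> S) \<and>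
        (cc * q1 * p2 + p1 * dd * q2 \<noteq> 0 \<and> frac_embed (dd * q2 * p2) / frac_embed (cc * q1 * p2 + p1 * dd * q2) \<in> S))
        \<longleftrightarrow> (\<exists>s. s \<in> S \<and> s * z \<in> S \<and> s * q + p \<noteq> 0 \<and> inverse (s * q + p) \<in> S)"
      proof
        assume "\<exists>cc dd. (dd \<noteq> 0 \<and> frac_embed cc / frac_embed dd \<in> S) \<and>
          (dd * b \<noteq> 0 \<and> frac_embed (cc * a) / frac_embed (dd * b) \<in> S) \<and>
          (cc * q1 * p2 + p1 * dd * q2 \<noteq> 0 \<and> frac_embed (dd * q2 * p2) / frac_embed (cc * q1 * p2 + p1 * dd * q2) \<in> S)"
        then obtain cc dd where h: "dd \<noteq> 0" "frac_embed cc / frac_embed dd \<in> S"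
          "frac_embed (cc * a) / frac_embed (dd * b) \<in> S" "cc * q1 * p2 + p1 * dd * q2 \<noteq> 0"
          "frac_embed (dd * q2 * p2) / frac_embed (cc * q1 * p2 + p1 * dd * q2) \<in> S" by blast
        define s where "s = frac_embed cc / frac_embed dd"
        have g: "s * q + p = frac_embed (cc * q1 * p2 + p1 * dd * q2) / frac_embed (dd * q2 * p2)"
          unfolding s_def p12(2) q12(2) by (rule frac_id[OF h(1) q12(1) p12(1)])
        have "s * z = frac_embed (cc * a) / frac_embed (dd * b)" using h(1) b0 by (simp add: s_def z_def)
        moreover have "s * q + p \<noteq> 0" unfolding g using h(1,4) q12(1) p12(1) by (simp del: fe_add fe_mult)
        moreover have "inverse (s * q + p) = frac_embed (dd * q2 * p2) / frac_embed (cc * q1 * p2 + p1 * dd * q2)"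
          using g by simp
        ultimately show "\<exists>s. s \<in> S \<and> s * z \<in> S \<and> s * q + p \<noteq> 0 \<and> inverse (s * q + p) \<in> S"
          using h(2,3,5) unfolding s_def[symmetric] by auto
      next
        assume "\<exists>s. s \<in> S \<and> s * z \<in> S \<and> s * q + p \<noteq> 0 \<and> inverse (s * q + p) \<in> S"
        then obtain s where s: "s \<in> S" "s * z \<in> S" "s * q + p \<noteq> 0" "inverse (s * q + p) \<in> S" by blast
        obtain cc dd where cd: "dd \<noteq> 0" "s = frac_embed cc / frac_embed dd" using fract_exists by blast
        have g: "s * q + p = frac_embed (cc * q1 * p2 + p1 * dd * q2) / frac_embed (dd * q2 * p2)"
          unfolding cd(2) p12(2) q12(2) by (rule frac_id[OF cd(1) q12(1) p12(1)])
        have D0: "cc * q1 * p2 + p1 * dd * q2 \<noteq> 0"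
        proof
          assume "cc * q1 * p2 + p1 * dd * q2 = 0"
          then have "s * q + p = 0" unfolding g by (simp del: fe_add fe_mult)
          then show False using s(3) by simp
        qed
        have "s * z = frac_embed (cc * a) / frac_embed (dd * b)" using cd b0 by (simp add: z_def)
        moreover have "inverse (s * q + p) = frac_embed (dd * q2 * p2) / frac_embed (cc * q1 * p2 + p1 * dd * q2)"
          using g by simp
        ultimately show "\<exists>cc dd. (dd \<noteq> 0 \<and> frac_embed cc / frac_embed dd \<in> S) \<and>
          (dd * b \<noteq> 0 \<and> frac_embed (cc * a) / frac_embed (dd * b) \<in> S) \<and>
          (cc * q1 * p2 + p1 * dd * q2 \<noteq> 0 \<and> frac_embed (dd * q2 * p2) / frac_embed (cc * q1 * p2 + p1 * dd * q2) \<in> S)"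
          using s cd D0 b0 by (intro exI[of _ cc] exI[of _ dd]) auto
      qed
      then show ?thesis using vc[of z] b0 Fz by simp
    qed
    finally show "(b \<noteq> 0 \<and> Fraction_Field.Fract a b \<in> V) \<longleftrightarrow> sat ?e \<phi>" by simp
  qed
qed

theorem lemma4p3:
  fixes n :: nat
  assumes "n \<ge> 1"
    and "breadth_le TYPE('a::idom) n"
  shows "\<exists>Os :: 'a fract set list.
           (\<forall>V\<in>set Os. valuation_ring V) \<and>
           integral_closure TYPE('a) = (\<Inter>V\<in>set Os. V) \<and>
           frac_definable (integral_closure TYPE('a)) \<and>
           (\<forall>V\<in>set Os. frac_definable V)"
proof -
  obtain Os where Os: "set Os = (Mins :: 'a fract set set)"
    using finite_list[OF Mins_finite[OF assms(2,1)]] by blast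
  show ?thesis
  proof (intro exI[of _ Os] conjI ballI)
    fix V assume "V \<in> set Os"
    then have V: "V \<in> Mins" using Os by simp
    show "valuation_ring V" by (rule Mins_vr[OF V])
    show "frac_definable V" by (rule def_V[OF assms(2,1) V])
  next
    show "integral_closure TYPE('a) = (\<Inter>V\<in>set Os. V)" using S_eq_Mins[where 'a='a] Os by simp
    show "frac_definable (integral_closure TYPE('a))" by (rule def_S[OF assms(2,1)])
  qed
qed


end
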